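(* Let $f\colon W\to U$ be a fibrant map between path connected spaces, with basepoints $\dagger\in W$, $*\in U$ and biset $B(f,\dagger,* )$. Let $U'\subseteq U$ be path connected with basepoint $*'$, let $\{W'_z\}_{z\in I}$ be the path connected components of $f^{-1}(U')$, with basepoints $\dagger'_z\in W'_z$, and let $B(f|_{W'_z},\dagger'_z,*')$ be the biset of $f|_{W'_z}\colon W'_z\to U'$. Let $()^-\colon B(f|_{W'_z},\dagger'_z,*')\to B(f,\dagger,* )$ be the congruences given by choices of paths $\gamma_z$ in $W$ from $\dagger$ to $\dagger'_z$ and $\gamma_*$ in $U$ from $*$ to $*'$: loops $\delta$ at $\dagger'_z$ map to $\gamma_z\delta\gamma_z^{-1}$, loops $\delta$ at $*'$ map to $\gamma_*\delta\gamma_*^{-1}$, and $b\mapsto f(\gamma_z)\,b\,\gamma_*^{-1}$. Then \[\bigsqcup_{z\in I}\pi_1(W,\dagger)\otimes_{\pi_1(W'_z,\dagger'_z)}B(f|_{W'_z},\dagger'_z,*')\longrightarrow B(f,\dagger,* ),\qquad g\otimes b\mapsto g\,b^-,\] is an isomorphism of $\pi_1(W,\dagger)$-$\pi_1(U',*')$-bisets, where $\pi_1(U',*')$ acts on $B(f,\dagger,* )$ via $()^-\colon\pi_1(U',*')\to\pi_1(U,* )$ and $\pi_1(W'_z,\dagger'_z)$ acts on $\pi_1(W,\dagger)$ via $()^-$.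
   Context: For a continuous map $f\colon Y\to X$ and basepoints $\dagger\in Y$, $*\in X$, $B(f,\dagger,* )$ is the set of homotopy classes rel endpoints of paths in $X$ from $f(\dagger)$ to $*$, a $\pi_1(Y,\dagger)$-$\pi_1(X,* )$-biset via $[\lambda]\cdot[\gamma]=[f\circ\lambda\#\gamma]$ and $[\gamma]\cdot[\mu]=[\gamma\#\mu]$. A map is fibrant if it has the homotopy lifting property with respect to all spaces. The product $A\otimes_K C$ of a right $K$-set and a left $K$-set is $A\times C$ modulo $(ak,c)=(a,kc)$. *)

theory Defs
  imports "HOL-Analysis.Analysis"
begin

text \<open>Concatenation and reversal of paths (same formulas as the library's joinpaths and
reversepath, but without a type-class restriction, so they work for abstract topologies).\<close>

definition pjoin :: "(real \<Rightarrow> 'a) \<Rightarrow> (real \<Rightarrow> 'a) \<Rightarrow> real \<Rightarrow> 'a" (infixr \<open>#\<^sub>p\<close> 75) where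
  "pjoin g1 g2 = (\<lambda>x. if x \<le> 1/2 then g1 (2 * x) else g2 (2 * x - 1))"

definition prev :: "(real \<Rightarrow> 'a) \<Rightarrow> real \<Rightarrow> 'a" where
  "prev g = (\<lambda>x. g (1 - x))"

definition phom :: "'a topology \<Rightarrow> (real \<Rightarrow> 'a) \<Rightarrow> (real \<Rightarrow> 'a) \<Rightarrow> bool" where
  "phom X p q \<longleftrightarrow> pathin X p \<and> pathin X q \<and>
     homotopic_with (\<lambda>r. r 0 = p 0 \<and> r 1 = p 1) (top_of_set {0..1}) X p q"

definition pclass :: "'a topology \<Rightarrow> (real \<Rightarrow> 'a) \<Rightarrow> (real \<Rightarrow> 'a) set" where
  "pclass X p = {q. phom X p q}"

definition rep :: "'x set \<Rightarrow> 'x" where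
  "rep c = (SOME p. p \<in> c)"

definition paths_between :: "'a topology \<Rightarrow> 'a \<Rightarrow> 'a \<Rightarrow> (real \<Rightarrow> 'a) set" where
  "paths_between X x y = {p. pathin X p \<and> p 0 = x \<and> p 1 = y}"

definition pclasses :: "'a topology \<Rightarrow> 'a \<Rightarrow> 'a \<Rightarrow> (real \<Rightarrow> 'a) set set" where
  "pclasses X x y = pclass X ` paths_between X x y"

text \<open>Fundamental group pi_1(X,x) (as a set of classes; product is cjoin).\<close>
definition fund_group :: "'a topology \<Rightarrow> 'a \<Rightarrow> (real \<Rightarrow> 'a) set set" where
  "fund_group X x = pclasses X x x"

definition biset :: "'a topology \<Rightarrow> ('b \<Rightarrow> 'a) \<Rightarrow> 'b \<Rightarrow> 'a \<Rightarrow> (real \<Rightarrow> 'a) set set" where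
  "biset X f d s = pclasses X (f d) s"

definition cjoin :: "'a topology \<Rightarrow> (real \<Rightarrow> 'a) set \<Rightarrow> (real \<Rightarrow> 'a) set \<Rightarrow> (real \<Rightarrow> 'a) set" where
  "cjoin X a b = pclass X (rep a #\<^sub>p rep b)"

definition cmap :: "'a topology \<Rightarrow> ('b \<Rightarrow> 'a) \<Rightarrow> (real \<Rightarrow> 'b) set \<Rightarrow> (real \<Rightarrow> 'a) set" where
  "cmap X f a = pclass X (f \<circ> rep a)"

definition cconj :: "'a topology \<Rightarrow> (real \<Rightarrow> 'a) \<Rightarrow> (real \<Rightarrow> 'a) set \<Rightarrow> (real \<Rightarrow> 'a) set" where
  "cconj X \<gamma> a = pclass X ((\<gamma> #\<^sub>p rep a) #\<^sub>p prev \<gamma>)"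

definition blact :: "'a topology \<Rightarrow> ('b \<Rightarrow> 'a) \<Rightarrow> (real \<Rightarrow> 'b) set \<Rightarrow> (real \<Rightarrow> 'a) set \<Rightarrow> (real \<Rightarrow> 'a) set" where
  "blact X f l g = cjoin X (cmap X f l) g"

definition bract :: "'a topology \<Rightarrow> (real \<Rightarrow> 'a) set \<Rightarrow> (real \<Rightarrow> 'a) set \<Rightarrow> (real \<Rightarrow> 'a) set" where
  "bract X g m = cjoin X g m"

definition HLP_wrt :: "'c topology \<Rightarrow> 'b topology \<Rightarrow> 'a topology \<Rightarrow> ('b \<Rightarrow> 'a) \<Rightarrow> bool" where
  "HLP_wrt Z Y X f \<longleftrightarrow>
     (\<forall>H h0. continuous_map (prod_topology Z (top_of_set {0..1::real})) X H \<and>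
             continuous_map Z Y h0 \<and> (\<forall>z\<in>topspace Z. f (h0 z) = H (z, 0)) \<longrightarrow>
        (\<exists>G. continuous_map (prod_topology Z (top_of_set {0..1::real})) Y G \<and>
             (\<forall>z\<in>topspace Z. \<forall>t\<in>{0..1}. f (G (z, t)) = H (z, t)) \<and>
             (\<forall>z\<in>topspace Z. G (z, 0) = h0 z)))"

text \<open>HOL cannot quantify over all types inside a formula; we quantify over all topological
  spaces whose points lie in the type real \<times> real (all spaces of cardinality at most
  the continuum, up to homeomorphism).\<close>
definition fibrant :: "'b topology \<Rightarrow> 'a topology \<Rightarrow> ('b \<Rightarrow> 'a) \<Rightarrow> bool" where
  "fibrant Y X f \<longleftrightarrow> continuous_map Y X f \<and> (\<forall>Z :: (real \<times> real) topology. HLP_wrt Z Y X f)"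

definition tensor_gen :: "'a set \<Rightarrow> 'c set \<Rightarrow> 'k set \<Rightarrow> ('a \<Rightarrow> 'k \<Rightarrow> 'a) \<Rightarrow> ('k \<Rightarrow> 'c \<Rightarrow> 'c)
                         \<Rightarrow> ('a \<times> 'c) \<Rightarrow> ('a \<times> 'c) \<Rightarrow> bool" where
  "tensor_gen A C K ra la x y \<longleftrightarrow> x \<in> A \<times> C \<and> y \<in> A \<times> C \<and>
     (\<exists>a\<in>A. \<exists>c\<in>C. \<exists>k\<in>K. x = (ra a k, c) \<and> y = (a, la k c))"

definition tensor_rel :: "'a set \<Rightarrow> 'c set \<Rightarrow> 'k set \<Rightarrow> ('a \<Rightarrow> 'k \<Rightarrow> 'a) \<Rightarrow> ('k \<Rightarrow> 'c \<Rightarrow> 'c)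
                         \<Rightarrow> (('a \<times> 'c) \<times> ('a \<times> 'c)) set" where
  "tensor_rel A C K ra la = {(x, y). x \<in> A \<times> C \<and> y \<in> A \<times> C \<and>
     (sup (tensor_gen A C K ra la) (tensor_gen A C K ra la)\<inverse>\<inverse>)\<^sup>*\<^sup>* x y}"

definition tensor_prod :: "'a set \<Rightarrow> 'c set \<Rightarrow> 'k set \<Rightarrow> ('a \<Rightarrow> 'k \<Rightarrow> 'a) \<Rightarrow> ('k \<Rightarrow> 'c \<Rightarrow> 'c)
                         \<Rightarrow> ('a \<times> 'c) set set" where
  "tensor_prod A C K ra la = (A \<times> C) // tensor_rel A C K ra la"

definition tensor_elt :: "'a set \<Rightarrow> 'c set \<Rightarrow> 'k set \<Rightarrow> ('a \<Rightarrow> 'k \<Rightarrow> 'a) \<Rightarrow> ('k \<Rightarrow> 'c \<Rightarrow> 'c)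
                         \<Rightarrow> 'a \<Rightarrow> 'c \<Rightarrow> ('a \<times> 'c) set" where
  "tensor_elt A C K ra la a c = tensor_rel A C K ra la `` {(a, c)}"

definition comps :: "'b topology \<Rightarrow> ('b \<Rightarrow> 'a) \<Rightarrow> 'a set \<Rightarrow> 'b set set" where
  "comps Y f U' = path_components_of (subtopology Y {w \<in> topspace Y. f w \<in> U'})"

definition factor :: "'b topology \<Rightarrow> 'a topology \<Rightarrow> ('b \<Rightarrow> 'a) \<Rightarrow> 'b \<Rightarrow> 'a set \<Rightarrow> 'a
                      \<Rightarrow> 'b set \<Rightarrow> 'b \<Rightarrow> (real \<Rightarrow> 'b) \<Rightarrow> ((real \<Rightarrow> 'b) set \<times> (real \<Rightarrow> 'a) set) set set" where
  "factor Y X f dag U' st' C b0 \<gamma> =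
     tensor_prod (fund_group Y dag) (biset (subtopology X U') f b0 st')
       (fund_group (subtopology Y C) b0)
       (\<lambda>g k. cjoin Y g (cconj Y \<gamma> k))
       (\<lambda>k b. blact (subtopology X U') f k b)"

definition factor_elt :: "'b topology \<Rightarrow> 'a topology \<Rightarrow> ('b \<Rightarrow> 'a) \<Rightarrow> 'b \<Rightarrow> 'a set \<Rightarrow> 'a
                      \<Rightarrow> 'b set \<Rightarrow> 'b \<Rightarrow> (real \<Rightarrow> 'b) \<Rightarrow> (real \<Rightarrow> 'b) set \<Rightarrow> (real \<Rightarrow> 'a) set
                      \<Rightarrow> ((real \<Rightarrow> 'b) set \<times> (real \<Rightarrow> 'a) set) set" where
  "factor_elt Y X f dag U' st' C b0 \<gamma> g b =
     tensor_elt (fund_group Y dag) (biset (subtopology X U') f b0 st')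
       (fund_group (subtopology Y C) b0)
       (\<lambda>g k. cjoin Y g (cconj Y \<gamma> k))
       (\<lambda>k b. blact (subtopology X U') f k b) g b"

definition bminus :: "'a topology \<Rightarrow> ('b \<Rightarrow> 'a) \<Rightarrow> (real \<Rightarrow> 'b) \<Rightarrow> (real \<Rightarrow> 'a) \<Rightarrow> (real \<Rightarrow> 'a) set
                      \<Rightarrow> (real \<Rightarrow> 'a) set" where
  "bminus X f \<gamma> \<gamma>s b = pclass X (((f \<circ> \<gamma>) #\<^sub>p rep b) #\<^sub>p prev \<gamma>s)"

end

theory Submission
  imports Defs
begin

definition pth :: "'a topology \<Rightarrow> (real \<Rightarrow> 'a) \<Rightarrow> 'a \<Rightarrow> 'a \<Rightarrow> bool" where
  "pth T p x y \<longleftrightarrow> pathin T p \<and> p 0 = x \<and> p 1 = y"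

lemma pjoin_0 [simp]: "(p #\<^sub>p q) 0 = p 0" by (simp add: pjoin_def)
lemma pjoin_1 [simp]: "(p #\<^sub>p q) 1 = q 1" by (simp add: pjoin_def)
lemma prev_0 [simp]: "prev p 0 = p 1" by (simp add: prev_def)
lemma prev_1 [simp]: "prev p 1 = p 0" by (simp add: prev_def)

lemma pathin_pjoin:
  assumes "pathin X g1" "pathin X g2" "g1 1 = g2 0"
  shows "pathin X (g1 #\<^sub>p g2)"
proof -
  let ?T01 = "top_of_set {0..1::real}"
  have g1: "continuous_map ?T01 X g1" and g2: "continuous_map ?T01 X g2"
    using assms by (auto simp: pathin_def)
  have eq: "g1 #\<^sub>p g2 = (\<lambda>x. if x \<le> 1/2 then (g1 \<circ> (\<lambda>t. 2 * t)) x else (g2 \<circ> (\<lambda>t. 2 * t -1)) x)"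
    by (simp add: pjoin_def fun_eq_iff)
  show ?thesis unfolding pathin_def eq
    proof (intro continuous_map_cases_le continuous_map_compose, force, force)
      show "continuous_map (subtopology ?T01 {x \<in> topspace ?T01. x \<le> 1/2}) ?T01 ((*) 2)"
        by (auto simp: continuous_map_in_subtopology continuous_map_from_subtopology)
      have "continuous_map
             (subtopology (top_of_set {0..1}) {x. 0 \<le> x \<and> x \<le> 1 \<and> 1 \<le> x * 2})
             euclideanreal (\<lambda>t. 2 * t - 1)"
        by (intro continuous_intros) (force intro: continuous_map_from_subtopology)
      then show "continuous_map (subtopology ?T01 {x \<in> topspace ?T01. 1/2 \<le> x}) ?T01 (\<lambda>t. 2 * t - 1)"
        by (force simp: continuous_map_in_subtopology)
      show "(g1 \<circ> (*) 2) x = (g2 \<circ> (\<lambda>t. 2 * t - 1)) x" if "x \<in> topspace ?T01" "x = 1/2" for x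
      proof -
        have "2*x = 1" "2*x-1 = 0" using that by auto
        then show ?thesis using assms by simp
      qed
    qed (use g1 g2 in auto)
qed

lemma pathin_prev: assumes "pathin X g" shows "pathin X (prev g)"
proof -
  have "prev g = g \<circ> (\<lambda>x. 1 - x)" by (simp add: prev_def fun_eq_iff)
  moreover have "continuous_map (top_of_set {0..1::real}) (top_of_set {0..1}) (\<lambda>x. 1 - x)"
    by (auto intro!: continuous_intros)
  ultimately show ?thesis using assms unfolding pathin_def by (metis continuous_map_compose)
qed

lemma pth_join [intro]: "pth T p x y \<Longrightarrow> pth T q y z \<Longrightarrow> pth T (p #\<^sub>p q) x z"
  by (auto simp: pth_def intro: pathin_pjoin)
lemma pth_prev [intro]: "pth T p x y \<Longrightarrow> pth T (prev p) y x"
  by (auto simp: pth_def intro: pathin_prev)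
lemma pth_comp [intro]: "pth S p x y \<Longrightarrow> continuous_map S T g \<Longrightarrow> pth T (g \<circ> p) (g x) (g y)"
  by (auto simp: pth_def intro: pathin_compose)
lemma pth_const [intro]: "x \<in> topspace T \<Longrightarrow> pth T (\<lambda>_. x) x x"
  by (auto simp: pth_def pathin_def)

lemma comp_pjoin [simp]: "g \<circ> (p #\<^sub>p q) = (g \<circ> p) #\<^sub>p (g \<circ> q)"
  by (simp add: pjoin_def fun_eq_iff)
lemma comp_prev [simp]: "g \<circ> prev p = prev (g \<circ> p)"
  by (simp add: prev_def fun_eq_iff)

lemma phom_pathin: "phom T p q \<Longrightarrow> pathin T p \<and> pathin T q"
  by (simp add: phom_def)

lemma phom_ends: "phom T p q \<Longrightarrow> q 0 = p 0 \<and> q 1 = p 1"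
proof -
  assume "phom T p q"
  then have "homotopic_with (\<lambda>r. r 0 = p 0 \<and> r 1 = p 1) (top_of_set {0..1}) T p q"
    by (simp add: phom_def)
  from homotopic_with_imp_property[OF this] show ?thesis by simp
qed

lemma phom_refl: "pathin T p \<Longrightarrow> phom T p p"
  by (simp add: phom_def pathin_def)

lemma phom_sym: "phom T p q \<Longrightarrow> phom T q p"
proof -
  assume h: "phom T p q"
  then have e: "q 0 = p 0" "q 1 = p 1" using phom_ends by blast+
  show ?thesis using h unfolding phom_def
    using homotopic_with_symD[of "\<lambda>r. r 0 = p 0 \<and> r 1 = p 1"] e by auto
qed

lemma phom_trans: "phom T p q \<Longrightarrow> phom T q r \<Longrightarrow> phom T p r"
proof -
  assume h1: "phom T p q" and h2: "phom T q r"
  then have e: "q 0 = p 0" "q 1 = p 1" using phom_ends by blast+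
  show ?thesis using h1 h2 unfolding phom_def
    using homotopic_with_trans[of "\<lambda>r. r 0 = p 0 \<and> r 1 = p 1"] e by auto
qed

lemma phom_eqI: "pathin T p \<Longrightarrow> (\<And>x. x \<in> {0..1} \<Longrightarrow> q x = p x) \<Longrightarrow> phom T p q"
proof -
  assume p: "pathin T p" and eq: "\<And>x. x \<in> {0..1} \<Longrightarrow> q x = p x"
  have "homotopic_with (\<lambda>r. r 0 = p 0 \<and> r 1 = p 1) (top_of_set {0..1}) T p p"
    using p by (simp add: pathin_def)
  then have "homotopic_with (\<lambda>r. r 0 = p 0 \<and> r 1 = p 1) (top_of_set {0..1}) T p q"
    by (rule homotopic_with_eq) (auto simp: eq)
  moreover have "pathin T q" using p eq unfolding pathin_def
    by (metis (no_types, lifting) continuous_map_eq topspace_euclidean_subtopology)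
  ultimately show ?thesis using p by (simp add: phom_def)
qed

lemma phom_compose: "phom S p q \<Longrightarrow> continuous_map S T g \<Longrightarrow> phom T (g \<circ> p) (g \<circ> q)"
  unfolding phom_def
  by (auto intro: pathin_compose homotopic_with_compose_continuous_map_left)

lemma phom_subtop: "phom (subtopology T A) p q \<Longrightarrow> phom T p q"
  using phom_compose[of "subtopology T A" p q T id]
  by (simp add: continuous_map_from_subtopology)

lemma phom_prev: assumes "phom T p q" shows "phom T (prev p) (prev q)"
proof -
  have e: "q 0 = p 0" "q 1 = p 1" using assms phom_ends by blast+
  have c: "continuous_map (top_of_set {0..1::real}) (top_of_set {0..1}) (\<lambda>x. 1 - x)"
    by (auto intro!: continuous_intros)
  have "homotopic_with (\<lambda>r. r 0 = p 0 \<and> r 1 = p 1) (top_of_set {0..1}) T p q"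
    using assms by (simp add: phom_def)
  then have "homotopic_with (\<lambda>r. r 0 = p 1 \<and> r 1 = p 0) (top_of_set {0..1}) T (p \<circ> (\<lambda>x. 1 - x)) (q \<circ> (\<lambda>x. 1 - x))"
    by (rule homotopic_with_compose_continuous_map_right[OF _ c]) auto
  moreover have "prev p = p \<circ> (\<lambda>x. 1 - x)" "prev q = q \<circ> (\<lambda>x. 1 - x)" by (auto simp: prev_def fun_eq_iff)
  moreover have "pathin T (prev p)" "pathin T (prev q)" using assms by (auto simp: phom_def pathin_prev)
  ultimately show ?thesis by (simp add: phom_def)
qed

text \<open>Push forward of straight-line homotopies from a convex set.\<close>
lemma phom_convex:
  fixes P Q :: "real \<Rightarrow> 'v::real_normed_vector"
  assumes S: "convex S" and k: "continuous_map (top_of_set S) T k"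
    and P: "path P" "path_image P \<subseteq> S" and Q: "path Q" "path_image Q \<subseteq> S"
    and e: "pathstart P = pathstart Q" "pathfinish P = pathfinish Q"
  shows "phom T (k \<circ> P) (k \<circ> Q)"
proof -
  define L where "L = (\<lambda>z::real\<times>real. (1 - fst z) *\<^sub>R P (snd z) + fst z *\<^sub>R Q (snd z))"
  have cP: "continuous_on {0..1} P" and cQ: "continuous_on {0..1} Q" using P Q by (auto simp: path_def)
  have "continuous_on ({0..1}\<times>{0..1}) L"
    unfolding L_def
    by (intro continuous_intros continuous_on_compose2[OF cP] continuous_on_compose2[OF cQ]) auto
  moreover have "L ` ({0..1}\<times>{0..1}) \<subseteq> S"
  proof clarify
    fix t x :: real assume "t \<in> {0..1}" "x \<in> {0..1}"
    then have "P x \<in> S" "Q x \<in> S" using P Q by (auto simp: path_image_def image_subset_iff)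
    with \<open>t \<in> {0..1}\<close> show "L (t,x) \<in> S" unfolding L_def using S
      by (auto intro: convexD_alt)
  qed
  ultimately have cL: "continuous_map (top_of_set ({0..1}\<times>{0..1})) (top_of_set S) L"
    by (auto simp: continuous_map_subtopology_eu)
  have ch: "continuous_map (prod_topology (top_of_set {0..1}) (top_of_set {0..1})) T (k \<circ> L)"
    using continuous_map_compose[OF cL k] by simp
  have pk: "pathin T (k \<circ> P)" "pathin T (k \<circ> Q)"
    using P Q k unfolding pathin_def path_def path_image_def
    by (auto intro!: continuous_map_compose[OF _ k] simp: continuous_map_subtopology_eu image_subset_iff)
  have "homotopic_with (\<lambda>r. r 0 = (k \<circ> P) 0 \<and> r 1 = (k \<circ> P) 1) (top_of_set {0..1}) T (k \<circ> P) (k \<circ> Q)"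
    unfolding homotopic_with_def
  proof (intro exI conjI)
    show "continuous_map (prod_topology (top_of_set {0..1}) (top_of_set {0..1})) T (k \<circ> L)" by (rule ch)
    show "\<forall>x. (k \<circ> L) (0, x) = (k \<circ> P) x" by (simp add: L_def)
    show "\<forall>x. (k \<circ> L) (1, x) = (k \<circ> Q) x" by (simp add: L_def)
    show "\<forall>t\<in>{0..1}. (\<lambda>x. (k \<circ> L) (t, x)) 0 = (k \<circ> P) 0 \<and> (\<lambda>x. (k \<circ> L) (t, x)) 1 = (k \<circ> P) 1"
      using e by (auto simp: L_def pathstart_def pathfinish_def algebra_simps)
  qed
  then show ?thesis using pk by (simp add: phom_def)
qed

lemma comp_joinpaths: "k \<circ> (P +++ Q) = (k \<circ> P) #\<^sub>p (k \<circ> Q)"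
  by (simp add: joinpaths_def pjoin_def fun_eq_iff)

lemma pjoin_eqI:
  assumes "\<And>x. x \<in> {0..1} \<Longrightarrow> p x = p' x" "\<And>x. x \<in> {0..1} \<Longrightarrow> q x = q' x" "x \<in> {0..1::real}"
  shows "(p #\<^sub>p q) x = (p' #\<^sub>p q') x"
  using assms by (auto simp: pjoin_def)

lemma prev_eqI:
  assumes "\<And>x. x \<in> {0..1} \<Longrightarrow> p x = p' x" "x \<in> {0..1::real}"
  shows "prev p x = prev p' x"
  using assms by (auto simp: prev_def)

lemma phom_reparam:
  fixes P Q :: "real \<Rightarrow> real"
  assumes k: "pathin T k"
    and P: "path P" "path_image P \<subseteq> {0..1}" and Q: "path Q" "path_image Q \<subseteq> {0..1}"
    and e: "pathstart P = pathstart Q" "pathfinish P = pathfinish Q"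
  shows "phom T (k \<circ> P) (k \<circ> Q)"
  using phom_convex[of "{0..1}" T k P Q] assms by (simp add: pathin_def)

lemma path_image_linepath01: "a \<in> {0..1} \<Longrightarrow> b \<in> {0..1} \<Longrightarrow> path_image (linepath a b) \<subseteq> {0..1::real}"
  by (simp add: closed_segment_subset)

lemma phom_eqI2:
  assumes "phom T p q" "\<And>x. x \<in> {0..1} \<Longrightarrow> p' x = p x" "\<And>x. x \<in> {0..1} \<Longrightarrow> q' x = q x"
  shows "phom T p' q'"
proof -
  have "phom T p' p" using assms phom_pathin phom_eqI phom_sym by metis
  moreover have "phom T q q'" using assms phom_pathin phom_eqI by metis
  ultimately show ?thesis using assms(1) phom_trans by metis
qed

lemma g_assoc:
  assumes a: "pth T a x y" and b: "pth T b y z" and c: "pth T c z w"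
  shows "phom T ((a #\<^sub>p b) #\<^sub>p c) (a #\<^sub>p (b #\<^sub>p c))"
proof -
  let ?k = "a #\<^sub>p (b #\<^sub>p c)"
  have k: "pathin T ?k" using a b c by (auto simp: pth_def intro!: pathin_pjoin)
  let ?P = "(linepath 0 (1/2) +++ linepath (1/2) (3/4)) +++ linepath (3/4) (1::real)"
  let ?Q = "linepath 0 (1::real)"
  have h: "phom T (?k \<circ> ?P) (?k \<circ> ?Q)"
    by (rule phom_reparam[OF k]; (intro path_join_imp path_linepath subset_path_image_join path_image_linepath01)?; simp)
  have eqP: "(?k \<circ> ?P) x = ((a #\<^sub>p b) #\<^sub>p c) x" if x: "x \<in> {0..1}" for x
    unfolding comp_joinpaths
  proof (rule pjoin_eqI[OF _ _ x])
    show "((?k \<circ> linepath 0 (1/2)) #\<^sub>p (?k \<circ> linepath (1/2) (3/4))) u = (a #\<^sub>p b) u" if "u \<in> {0..1}" for u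
    proof (rule pjoin_eqI[OF _ _ that])
      show "(?k \<circ> linepath 0 (1/2)) v = a v" if "v \<in> {0..1}" for v
        using that by (auto simp: pjoin_def linepath_def)
      show "(?k \<circ> linepath (1/2) (3/4)) v = b v" if "v \<in> {0..1}" for v
      proof (cases "v = 0")
        case True then show ?thesis using a b by (simp add: pjoin_def linepath_def pth_def)
      next
        case False
        have y: "linepath (1/2) (3/4) v = 1/2 + v/4" by (simp add: linepath_def field_simps)
        have "2 * (1/2 + v/4) - 1 = v/2" by (simp add: algebra_simps)
        then show ?thesis using that False by (simp add: y pjoin_def)
      qed
    qed
    show "(?k \<circ> linepath (3/4) 1) v = c v" if "v \<in> {0..1}" for v
    proof (cases "v = 0")
      case True then show ?thesis using b c by (simp add: pjoin_def linepath_def pth_def)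
    next
      case False
      have y: "linepath (3/4) 1 v = 3/4 + v/4" by (simp add: linepath_def field_simps)
      have "2 * (3/4 + v/4) - 1 = 1/2 + v/2" "2 * (1/2 + v/2) - 1 = v" by (simp_all add: algebra_simps)
      then show ?thesis using that False by (simp add: y pjoin_def)
    qed
  qed
  show ?thesis
    by (rule phom_eqI2[OF h]) (rule eqP[symmetric], assumption, simp add: linepath_def)
qed

lemma g_lunit:
  assumes a: "pth T a x y"
  shows "phom T ((\<lambda>_. x) #\<^sub>p a) a"
proof -
  have k: "pathin T a" using a by (simp add: pth_def)
  let ?P = "linepath 0 0 +++ linepath 0 (1::real)"
  let ?Q = "linepath 0 (1::real)"
  have h: "phom T (a \<circ> ?P) (a \<circ> ?Q)"
    by (rule phom_reparam[OF k]; (intro path_join_imp path_linepath subset_path_image_join path_image_linepath01)?; simp)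
  show ?thesis
    by (rule phom_eqI2[OF h]) (use a in \<open>auto simp: pth_def linepath_def pjoin_def joinpaths_def\<close>)
qed

lemma g_runit:
  assumes a: "pth T a x y"
  shows "phom T (a #\<^sub>p (\<lambda>_. y)) a"
proof -
  have k: "pathin T a" using a by (simp add: pth_def)
  let ?P = "linepath 0 1 +++ linepath 1 (1::real)"
  let ?Q = "linepath 0 (1::real)"
  have h: "phom T (a \<circ> ?P) (a \<circ> ?Q)"
    by (rule phom_reparam[OF k]; (intro path_join_imp path_linepath subset_path_image_join path_image_linepath01)?; simp)
  show ?thesis
    by (rule phom_eqI2[OF h]) (use a in \<open>auto simp: pth_def linepath_def pjoin_def joinpaths_def\<close>)
qed

lemma g_rinv:
  assumes a: "pth T a x y"
  shows "phom T (a #\<^sub>p prev a) (\<lambda>_. x)"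
proof -
  have k: "pathin T a" using a by (simp add: pth_def)
  let ?P = "linepath 0 1 +++ linepath 1 (0::real)"
  let ?Q = "linepath 0 (0::real)"
  have h: "phom T (a \<circ> ?P) (a \<circ> ?Q)"
    by (rule phom_reparam[OF k]; (intro path_join_imp path_linepath subset_path_image_join path_image_linepath01)?; simp)
  show ?thesis
    by (rule phom_eqI2[OF h]) (use a in \<open>auto simp: pth_def linepath_def pjoin_def joinpaths_def prev_def algebra_simps\<close>)
qed

lemma prev_prev [simp]: "prev (prev a) = a" by (simp add: prev_def)

lemma g_linv:
  assumes a: "pth T a x y"
  shows "phom T (prev a #\<^sub>p a) (\<lambda>_. y)"
  using g_rinv[OF pth_prev[OF a]] by simp

lemma phom_join:
  assumes hp: "phom T p p'" and hq: "phom T q q'" and e: "p 1 = q 0"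
  shows "phom T (p #\<^sub>p q) (p' #\<^sub>p q')"
proof -
  let ?I = "{0..1::real}"
  obtain h where ch: "continuous_map (prod_topology (top_of_set ?I) (top_of_set ?I)) T h"
    and h0: "\<forall>x. h (0, x) = p x" and h1: "\<forall>x. h (1, x) = p' x"
    and hP: "\<forall>t\<in>?I. h (t, 0) = p 0 \<and> h (t, 1) = p 1"
    using hp by (auto simp: phom_def homotopic_with_def)
  obtain k where ck: "continuous_map (prod_topology (top_of_set ?I) (top_of_set ?I)) T k"
    and k0: "\<forall>x. k (0, x) = q x" and k1: "\<forall>x. k (1, x) = q' x"
    and kP: "\<forall>t\<in>?I. k (t, 0) = q 0 \<and> k (t, 1) = q 1"
    using hq by (auto simp: phom_def homotopic_with_def)
  have ch': "continuous_map (top_of_set (?I \<times> ?I)) T h" using ch by simp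
  have ck': "continuous_map (top_of_set (?I \<times> ?I)) T k" using ck by simp
  define H where "H = (\<lambda>z. if snd z \<le> 1/2 then (h \<circ> (\<lambda>z. (fst z, 2 * snd z))) z
                            else (k \<circ> (\<lambda>z. (fst z, 2 * snd z - 1))) z)"
  have cH: "continuous_map (top_of_set (?I \<times> ?I)) T H"
    unfolding H_def
  proof (rule continuous_map_cases_le)
    show "continuous_map (top_of_set (?I \<times> ?I)) euclideanreal snd"
      by (simp add: continuous_on_snd)
    show "continuous_map (top_of_set (?I \<times> ?I)) euclideanreal (\<lambda>x. 1/2)" by simp
    have "continuous_map (subtopology (top_of_set (?I \<times> ?I)) {x \<in> topspace (top_of_set (?I \<times> ?I)). snd x \<le> 1/2})
            (top_of_set (?I \<times> ?I)) (\<lambda>z. (fst z, 2 * snd z))"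
      by (auto simp: subtopology_subtopology continuous_map_subtopology_eu intro!: continuous_intros)
    then show "continuous_map (subtopology (top_of_set (?I \<times> ?I)) {x \<in> topspace (top_of_set (?I \<times> ?I)). snd x \<le> 1/2}) T
                 (h \<circ> (\<lambda>z. (fst z, 2 * snd z)))"
      using ch' continuous_map_compose by blast
    have "continuous_map (subtopology (top_of_set (?I \<times> ?I)) {x \<in> topspace (top_of_set (?I \<times> ?I)). 1/2 \<le> snd x})
            (top_of_set (?I \<times> ?I)) (\<lambda>z. (fst z, 2 * snd z - 1))"
      by (auto simp: subtopology_subtopology continuous_map_subtopology_eu intro!: continuous_intros)
    then show "continuous_map (subtopology (top_of_set (?I \<times> ?I)) {x \<in> topspace (top_of_set (?I \<times> ?I)). 1/2 \<le> snd x}) T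
                 (k \<circ> (\<lambda>z. (fst z, 2 * snd z - 1)))"
      using ck' continuous_map_compose by blast
    show "(h \<circ> (\<lambda>z. (fst z, 2 * snd z))) x = (k \<circ> (\<lambda>z. (fst z, 2 * snd z - 1))) x"
      if "x \<in> topspace (top_of_set (?I \<times> ?I))" "snd x = 1/2" for x
    proof -
      have "fst x \<in> ?I" using that by auto
      then show ?thesis using that hP kP e by (simp add: mult.commute)
    qed
  qed
  have "homotopic_with (\<lambda>r. r 0 = (p #\<^sub>p q) 0 \<and> r 1 = (p #\<^sub>p q) 1) (top_of_set ?I) T (p #\<^sub>p q) (p' #\<^sub>p q')"
    unfolding homotopic_with_def
  proof (intro exI conjI)
    show "continuous_map (prod_topology (top_of_set ?I) (top_of_set ?I)) T H" using cH by simp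
    show "\<forall>x. H (0, x) = (p #\<^sub>p q) x" by (simp add: H_def pjoin_def h0 k0)
    show "\<forall>x. H (1, x) = (p' #\<^sub>p q') x" by (simp add: H_def pjoin_def h1 k1)
    show "\<forall>t\<in>?I. (\<lambda>x. H (t, x)) 0 = (p #\<^sub>p q) 0 \<and> (\<lambda>x. H (t, x)) 1 = (p #\<^sub>p q) 1"
      using hP kP by (simp add: H_def)
  qed
  moreover have "pathin T (p #\<^sub>p q)" "pathin T (p' #\<^sub>p q')"
    using hp hq e phom_ends[OF hp] phom_ends[OF hq] by (auto simp: phom_def intro!: pathin_pjoin)
  ultimately show ?thesis by (simp add: phom_def)
qed

lemma phom_joinl: "phom T p p' \<Longrightarrow> pathin T q \<Longrightarrow> p 1 = q 0 \<Longrightarrow> phom T (p #\<^sub>p q) (p' #\<^sub>p q)"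
  by (simp add: phom_join phom_refl)
lemma phom_joinr: "phom T q q' \<Longrightarrow> pathin T p \<Longrightarrow> p 1 = q 0 \<Longrightarrow> phom T (p #\<^sub>p q) (p #\<^sub>p q')"
  by (simp add: phom_join phom_refl)

lemma pclass_mem: "pathin T p \<Longrightarrow> p \<in> pclass T p"
  by (simp add: pclass_def phom_refl)

lemma rep_pclass: "pathin T p \<Longrightarrow> phom T p (rep (pclass T p))"
proof -
  assume "pathin T p"
  then have "p \<in> pclass T p" by (rule pclass_mem)
  then have "rep (pclass T p) \<in> pclass T p" unfolding rep_def using someI[of "\<lambda>q. q \<in> pclass T p" p] by blast
  then show ?thesis by (simp add: pclass_def)
qed

lemma pclass_eq: "phom T p q \<Longrightarrow> pclass T p = pclass T q"
  unfolding pclass_def by (auto intro: phom_trans phom_sym)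

lemma pclass_eq_iff: "pathin T p \<Longrightarrow> pclass T p = pclass T q \<longleftrightarrow> phom T p q"
  by (metis mem_Collect_eq pclass_def pclass_eq pclass_mem phom_sym)

lemma rep_pth: "pth T p x y \<Longrightarrow> pth T (rep (pclass T p)) x y"
  using rep_pclass[of T p] phom_ends[of T p] phom_pathin[of T p]
  by (auto simp: pth_def)

lemma cjoin_pclass:
  assumes "pth T p x y" "pth T q y z"
  shows "cjoin T (pclass T p) (pclass T q) = pclass T (p #\<^sub>p q)"
proof -
  have 1: "phom T p (rep (pclass T p))" "phom T q (rep (pclass T q))"
    using assms rep_pclass by (auto simp: pth_def)
  have "phom T (p #\<^sub>p q) (rep (pclass T p) #\<^sub>p rep (pclass T q))"
    using phom_join[OF 1] assms by (simp add: pth_def)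
  then show ?thesis unfolding cjoin_def by (metis pclass_eq)
qed

lemma cmap_pclass:
  assumes "pathin S p" "continuous_map S T g"
  shows "cmap T g (pclass S p) = pclass T (g \<circ> p)"
proof -
  have "phom T (g \<circ> p) (g \<circ> rep (pclass S p))"
    using phom_compose[OF rep_pclass[OF assms(1)] assms(2)] .
  then show ?thesis unfolding cmap_def by (metis pclass_eq)
qed

lemma cconj_pclass:
  assumes S: "\<And>u v. phom S u v \<Longrightarrow> phom T u v"
    and p: "pth S p y y" and g: "pth T \<gamma> x y"
  shows "cconj T \<gamma> (pclass S p) = pclass T ((\<gamma> #\<^sub>p p) #\<^sub>p prev \<gamma>)"
proof -
  have r: "phom T p (rep (pclass S p))" using S rep_pclass p by (auto simp: pth_def)
  have pT: "pth T p y y" using r phom_pathin phom_ends p by (fastforce simp: pth_def)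
  have "phom T ((\<gamma> #\<^sub>p p) #\<^sub>p prev \<gamma>) ((\<gamma> #\<^sub>p rep (pclass S p)) #\<^sub>p prev \<gamma>)"
    using pT g r phom_ends[OF r]
    by (intro phom_joinl phom_joinr) (auto simp: pth_def intro: pathin_prev pathin_pjoin)
  then show ?thesis unfolding cconj_def by (metis pclass_eq)
qed

lemma bminus_pclass:
  assumes S: "\<And>u v. phom S u v \<Longrightarrow> phom X u v"
    and q: "pth S q y z" and g: "pth X (f \<circ> \<gamma>) x y" and s: "pth X gs w z"
  shows "bminus X f \<gamma> gs (pclass S q) = pclass X (((f \<circ> \<gamma>) #\<^sub>p q) #\<^sub>p prev gs)"
proof -
  have r: "phom X q (rep (pclass S q))" using S rep_pclass q by (auto simp: pth_def)
  have pT: "pth X q y z" using r phom_pathin phom_ends q by (fastforce simp: pth_def)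
  have "phom X (((f \<circ> \<gamma>) #\<^sub>p q) #\<^sub>p prev gs) (((f \<circ> \<gamma>) #\<^sub>p rep (pclass S q)) #\<^sub>p prev gs)"
    using pT g s r phom_ends[OF r]
    by (intro phom_joinl phom_joinr) (auto simp: pth_def intro: pathin_prev pathin_pjoin)
  then show ?thesis unfolding bminus_def by (metis pclass_eq)
qed

lemma blact_pclass:
  assumes "pth S p x x" "continuous_map S T f" "pth T q (f x) z"
  shows "blact T f (pclass S p) (pclass T q) = pclass T ((f \<circ> p) #\<^sub>p q)"
proof -
  have "cmap T f (pclass S p) = pclass T (f \<circ> p)" by (rule cmap_pclass) (use assms in \<open>auto simp: pth_def\<close>)
  moreover have "pth T (f \<circ> p) (f x) (f x)" using assms by auto
  ultimately show ?thesis using assms cjoin_pclass by (simp add: blact_def)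
qed

lemma pclasses_E: "c \<in> pclasses T x y \<Longrightarrow> (\<And>p. pth T p x y \<Longrightarrow> c = pclass T p \<Longrightarrow> P) \<Longrightarrow> P"
  by (auto simp: pclasses_def paths_between_def pth_def)

lemma pclasses_I: "pth T p x y \<Longrightarrow> pclass T p \<in> pclasses T x y"
  by (auto simp: pclasses_def paths_between_def pth_def)

lemma pclass_in_iff: "pth T p x y \<Longrightarrow> pclass T p = pclass T q \<Longrightarrow> pth T q x y"
  by (metis pclass_eq_iff phom_ends phom_pathin pth_def)

section \<open>Lifting\<close>

lemma path_lift:
  assumes fib: "fibrant Y X f" and a: "pathin X \<alpha>" and w: "w0 \<in> topspace Y" "f w0 = \<alpha> 0"
  shows "\<exists>\<rho>. pathin Y \<rho> \<and> \<rho> 0 = w0 \<and> (\<forall>t\<in>{0..1}. f (\<rho> t) = \<alpha> t)"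
proof -
  let ?Z = "top_of_set {(0::real, 0::real)}"
  have hlp: "HLP_wrt ?Z Y X f" using fib by (simp add: fibrant_def)
  have cH: "continuous_map (prod_topology ?Z (top_of_set {0..1::real})) X (\<lambda>z. \<alpha> (snd z))"
    using continuous_map_compose[OF continuous_map_snd[of ?Z "top_of_set {0..1}"] a[unfolded pathin_def]] by (simp only: o_def)
  have ch0: "continuous_map ?Z Y (\<lambda>z. w0)" using w by simp
  obtain G where cG: "continuous_map (prod_topology ?Z (top_of_set {0..1::real})) Y G"
    and fG: "\<forall>z\<in>topspace ?Z. \<forall>t\<in>{0..1}. f (G (z, t)) = \<alpha> t"
    and G0: "\<forall>z\<in>topspace ?Z. G (z, 0) = w0"
    using hlp[unfolded HLP_wrt_def, rule_format, OF conjI[OF cH conjI[OF ch0]]] w by auto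
  have cp: "continuous_map (top_of_set {0..1}) (prod_topology ?Z (top_of_set {0..1::real})) (\<lambda>t. ((0,0), t))"
    by (intro continuous_map_pairedI) auto
  have "pathin Y (\<lambda>t. G ((0,0), t))"
    using continuous_map_compose[OF cp cG] unfolding pathin_def o_def .
  then show ?thesis using fG G0 by (intro exI[of _ "\<lambda>t. G ((0,0), t)"]) auto
qed

lemma htpy_lift:
  fixes H :: "real \<times> real \<Rightarrow> 'a"
  assumes fib: "fibrant Y X f"
    and cH: "continuous_map (prod_topology (top_of_set {0..1}) (top_of_set {0..1})) X H"
    and h0: "pathin Y h0" and e: "\<And>u. u \<in> {0..1} \<Longrightarrow> f (h0 u) = H (u, 0)"
  shows "\<exists>G. continuous_map (prod_topology (top_of_set {0..1}) (top_of_set {0..1})) Y G \<and>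
            (\<forall>u\<in>{0..1}. \<forall>t\<in>{0..1}. f (G (u, t)) = H (u, t)) \<and> (\<forall>u\<in>{0..1}. G (u, 0) = h0 u)"
proof -
  let ?Z = "top_of_set ({0..1::real} \<times> {0::real})"
  let ?I = "top_of_set {0..1::real}"
  have hlp: "HLP_wrt ?Z Y X f" using fib by (simp add: fibrant_def)
  have cf: "continuous_map ?Z ?I fst" by (auto simp: continuous_on_fst)
  have m1: "continuous_map (prod_topology ?Z ?I) ?I (\<lambda>p. fst (fst p))"
    using continuous_map_compose[OF continuous_map_fst[of ?Z ?I] cf] by (simp only: o_def)
  have m2': "continuous_map (prod_topology ?Z ?I) ?I snd" by (rule continuous_map_snd)
  have m: "continuous_map (prod_topology ?Z ?I) (prod_topology ?I ?I) (\<lambda>p. (fst (fst p), snd p))"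
    using continuous_map_pairedI[OF m1 m2'] .
  have cH': "continuous_map (prod_topology ?Z ?I) X (\<lambda>p. H (fst (fst p), snd p))"
    using continuous_map_compose[OF m cH] by (simp add: o_def)
  have ch0: "continuous_map ?Z Y (\<lambda>z. h0 (fst z))"
    using continuous_map_compose[OF cf h0[unfolded pathin_def]] by (simp add: o_def)
  have ee: "\<forall>z\<in>topspace ?Z. f (h0 (fst z)) = H (fst (fst (z, 0::real)), snd (z, 0::real))" using e by auto
  obtain G where cG: "continuous_map (prod_topology ?Z ?I) Y G"
    and fG: "\<forall>z\<in>topspace ?Z. \<forall>t\<in>{0..1}. f (G (z, t)) = H (fst (fst (z, t)), snd (z, t))"
    and G0: "\<forall>z\<in>topspace ?Z. G (z, 0) = h0 (fst z)"
    using hlp[unfolded HLP_wrt_def, THEN spec[of _ "\<lambda>p. H (fst (fst p), snd p)"], THEN spec[of _ "\<lambda>z. h0 (fst z)"], THEN mp, OF conjI[OF cH' conjI[OF ch0 ee]]] by auto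
  have m2: "continuous_map (prod_topology ?I ?I) (prod_topology ?Z ?I) (\<lambda>p. ((fst p, 0), snd p))"
  proof (intro continuous_map_pairedI)
    show "continuous_map (prod_topology ?I ?I) ?Z (\<lambda>x. (fst x, 0))"
      by (auto simp: continuous_on_fst intro!: continuous_intros)
    show "continuous_map (prod_topology ?I ?I) ?I snd" by (rule continuous_map_snd)
  qed
  show ?thesis
  proof (intro exI conjI)
    show "continuous_map (prod_topology ?I ?I) Y (\<lambda>p. G ((fst p, 0), snd p))"
      using continuous_map_compose[OF m2 cG] by (simp add: o_def)
  qed (use fG G0 in auto)
qed

lemmas [trans] = phom_trans

lemma fibval_pjoin:
  assumes "\<And>t. t \<in> {0..1} \<Longrightarrow> g (p t) = c" "\<And>t. t \<in> {0..1} \<Longrightarrow> g (q t) = c" "t \<in> {0..1::real}"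
  shows "g ((p #\<^sub>p q) t) = c"
  using assms by (auto simp: pjoin_def)

lemma fibval_prev:
  assumes "\<And>t. t \<in> {0..1} \<Longrightarrow> g (p t) = c" "t \<in> {0..1::real}"
  shows "g (prev p t) = c"
  using assms by (auto simp: prev_def)

lemma square_lemma:
  assumes cG: "continuous_map (prod_topology (top_of_set {0..1}) (top_of_set {0..1})) W G"
  shows "phom W ((\<lambda>u. G (u, 0)) #\<^sub>p (\<lambda>s. G (1, s))) ((\<lambda>s. G (0, s)) #\<^sub>p (\<lambda>u. G (u, 1)))"
proof -
  let ?S = "{0..1::real} \<times> {0..1::real}"
  have k: "continuous_map (top_of_set ?S) W G" using cG by simp
  have cv: "convex ?S" by (simp add: convex_Times)
  let ?P = "linepath (0::real,0::real) (1,0) +++ linepath (1,0) (1,1)"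
  let ?Q = "linepath (0::real,0::real) (0,1) +++ linepath (0,1) (1,1)"
  have seg: "path_image (linepath a b) \<subseteq> ?S" if "a \<in> ?S" "b \<in> ?S" for a b
    using that cv by (simp add: closed_segment_subset)
  have h: "phom W (G \<circ> ?P) (G \<circ> ?Q)"
    by (rule phom_convex[OF cv k]; (intro path_join_imp path_linepath subset_path_image_join seg)?; simp)
  have l: "linepath (a::real, b::real) (c, d) u = ((1 - u) * a + u * c, (1 - u) * b + u * d)" for a b c d u
    by (simp add: linepath_def)
  show ?thesis
    by (rule phom_eqI2[OF h]) (auto simp: comp_joinpaths pjoin_def l)
qed

lemma lift_compare:
  assumes fib: "fibrant Y X f"
    and r1: "pth Y \<rho>1 w e1" and r2: "pth Y \<rho>2 w e2" and hom: "phom X (f \<circ> \<rho>1) (f \<circ> \<rho>2)"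
  shows "\<exists>\<sigma>. pth Y \<sigma> e1 e2 \<and> (\<forall>t\<in>{0..1}. f (\<sigma> t) = f e1) \<and> phom Y (\<rho>1 #\<^sub>p \<sigma>) \<rho>2"
proof -
  have cf: "continuous_map Y X f" using fib by (simp add: fibrant_def)
  define x1 where "x1 = f e1"
  have a1: "pth X (f \<circ> \<rho>1) (f w) x1" using r1 cf x1_def by auto
  have a2: "pth X (f \<circ> \<rho>2) (f w) x1"
    using phom_ends[OF hom] phom_pathin[OF hom] r1 r2 x1_def by (auto simp: pth_def)
  have fe2: "f e2 = x1" using a2 r2 by (auto simp: pth_def)
  define h0 where "h0 = prev \<rho>1 #\<^sub>p \<rho>2"
  have h0p: "pth Y h0 e1 e2" unfolding h0_def using r1 r2 by blast
  have Fh: "f \<circ> h0 = prev (f \<circ> \<rho>1) #\<^sub>p (f \<circ> \<rho>2)" by (simp add: h0_def)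
  have "phom X (prev (f \<circ> \<rho>1) #\<^sub>p (f \<circ> \<rho>2)) (prev (f \<circ> \<rho>1) #\<^sub>p (f \<circ> \<rho>1))"
    using phom_sym[OF hom] a1 r2 by (intro phom_joinr) (auto simp: pth_def intro: pathin_prev)
  also have "phom X \<dots> (\<lambda>_. x1)" using g_linv[OF a1] .
  finally have hF: "phom X (f \<circ> h0) (\<lambda>_. x1)" by (simp add: Fh)
  obtain h where ch0: "continuous_map (top_of_set ({0..1::real} \<times> {0..1::real})) X h"
    and h0e: "\<forall>x. h (0, x) = f (h0 x)" and h1e: "\<forall>x. h (1, x) = x1"
    and hP: "\<forall>t\<in>{0..1}. h (t, 0) = f (h0 0) \<and> h (t, 1) = f (h0 1)"
    using hF unfolding phom_def homotopic_with_def prod_topology_subtopology_eu comp_apply by blast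
  have ch: "continuous_map (prod_topology (top_of_set {0..1}) (top_of_set {0..1})) X h" using ch0 by simp
  have hP': "\<forall>t\<in>{0..1}. h (t, 0) = x1 \<and> h (t, 1) = x1"
    using hP h0p fe2 x1_def by (auto simp: pth_def)
  let ?I = "top_of_set {0..1::real}"
  have sw: "continuous_map (prod_topology ?I ?I) (prod_topology ?I ?I) (\<lambda>p. (snd p, fst p))"
    by (intro continuous_map_pairedI continuous_map_fst continuous_map_snd)
  have cH: "continuous_map (prod_topology ?I ?I) X (\<lambda>p. h (snd p, fst p))"
    using continuous_map_compose[OF sw ch] by (simp only: o_def)
  obtain G where cG: "continuous_map (prod_topology ?I ?I) Y G"
    and fG: "\<forall>u\<in>{0..1}. \<forall>t\<in>{0..1}. f (G (u, t)) = h (t, u)"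
    and G0: "\<forall>u\<in>{0..1}. G (u, 0) = h0 u"
    using htpy_lift[OF fib cH, of h0] h0p h0e by (auto simp: pth_def)
  have pG: "pathin Y (\<lambda>s. G (c, s))" if "c \<in> {0..1}" for c
  proof -
    have "continuous_map ?I (prod_topology ?I ?I) (\<lambda>s. (c, s))"
      using that by (intro continuous_map_pairedI) auto
    from continuous_map_compose[OF this cG] show ?thesis unfolding pathin_def o_def .
  qed
  have pG': "pathin Y (\<lambda>u. G (u, c))" if "c \<in> {0..1}" for c
  proof -
    have "continuous_map ?I (prod_topology ?I ?I) (\<lambda>u. (u, c))"
      using that by (intro continuous_map_pairedI) auto
    from continuous_map_compose[OF this cG] show ?thesis unfolding pathin_def o_def .
  qed
  define a where "a = (\<lambda>s. G (0, s))"
  define b where "b = (\<lambda>s. G (1, s))"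
  define s' where "s' = (\<lambda>u. G (u, 1))"
  have G00: "G (0,0) = e1" "G (1,0) = e2" using G0 h0p by (auto simp: pth_def)
  have ap: "pth Y a e1 (G (0,1))" using pG[of 0] G00 by (simp add: pth_def a_def)
  have bp: "pth Y b e2 (G (1,1))" using pG[of 1] G00 by (simp add: pth_def b_def)
  have sp: "pth Y s' (G (0,1)) (G (1,1))" using pG'[of 1] by (simp add: pth_def s'_def)
  have fa: "f (a t) = x1" if "t \<in> {0..1}" for t using fG hP' that by (simp add: a_def)
  have fb: "f (b t) = x1" if "t \<in> {0..1}" for t using fG hP' that by (simp add: b_def)
  have fs: "f (s' t) = x1" if "t \<in> {0..1}" for t using fG h1e that by (simp add: s'_def)
  have sq: "phom Y (h0 #\<^sub>p b) (a #\<^sub>p s')"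
    by (rule phom_eqI2[OF square_lemma[OF cG]]) (auto simp: pjoin_def G0 a_def b_def s'_def)
  define \<sigma> where "\<sigma> = (a #\<^sub>p s') #\<^sub>p prev b"
  have \<sigma>p: "pth Y \<sigma> e1 e2" unfolding \<sigma>_def by (rule pth_join[OF pth_join[OF ap sp] pth_prev[OF bp]])
  have fas: "f ((a #\<^sub>p s') t) = x1" if "t \<in> {0..1}" for t
    by (rule fibval_pjoin[where g=f, OF fa fs that])
  have fpb: "f (prev b t) = x1" if "t \<in> {0..1}" for t
    by (rule fibval_prev[where g=f, OF fb that])
  have f\<sigma>0: "f (\<sigma> t) = x1" if "t \<in> {0..1}" for t
    unfolding \<sigma>_def by (rule fibval_pjoin[where g=f, OF fas fpb that])
  have f\<sigma>: "\<forall>t\<in>{0..1}. f (\<sigma> t) = f e1" using f\<sigma>0 x1_def by blast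
  have "phom Y (\<rho>1 #\<^sub>p \<sigma>) (\<rho>1 #\<^sub>p ((h0 #\<^sub>p b) #\<^sub>p prev b))"
    unfolding \<sigma>_def using phom_sym[OF sq] r1 ap sp bp h0p
    by (intro phom_joinr phom_joinl) (auto simp: pth_def intro: pathin_prev pathin_pjoin)
  also have "phom Y \<dots> (\<rho>1 #\<^sub>p (h0 #\<^sub>p (b #\<^sub>p prev b)))"
    using g_assoc[OF h0p bp pth_prev[OF bp]] r1 h0p by (intro phom_joinr) (auto simp: pth_def)
  also have "phom Y \<dots> (\<rho>1 #\<^sub>p (h0 #\<^sub>p (\<lambda>_. e2)))"
    using g_rinv[OF bp] r1 h0p bp by (intro phom_joinr) (auto simp: pth_def intro: pathin_pjoin pathin_prev)
  also have "phom Y \<dots> (\<rho>1 #\<^sub>p h0)"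
    using g_runit[OF h0p] r1 h0p by (intro phom_joinr) (auto simp: pth_def)
  also have "phom Y \<dots> ((\<rho>1 #\<^sub>p prev \<rho>1) #\<^sub>p \<rho>2)"
    unfolding h0_def using phom_sym[OF g_assoc[OF r1 pth_prev[OF r1] r2]] .
  also have "phom Y \<dots> ((\<lambda>_. w) #\<^sub>p \<rho>2)"
    using g_rinv[OF r1] r2 r1 by (intro phom_joinl) (auto simp: pth_def)
  also have "phom Y \<dots> \<rho>2" using g_lunit[OF r2] .
  finally show ?thesis using \<sigma>p f\<sigma> by blast
qed

definition isc :: "'a topology \<Rightarrow> (real \<Rightarrow> 'a) set \<Rightarrow> bool" where
  "isc T c \<longleftrightarrow> (\<exists>p. pathin T p \<and> c = pclass T p)"
definition cst :: "(real \<Rightarrow> 'a) set \<Rightarrow> 'a" where "cst c = rep c 0"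
definition cen :: "(real \<Rightarrow> 'a) set \<Rightarrow> 'a" where "cen c = rep c 1"
definition cinv :: "'a topology \<Rightarrow> (real \<Rightarrow> 'a) set \<Rightarrow> (real \<Rightarrow> 'a) set" where
  "cinv T c = pclass T (prev (rep c))"
definition cid :: "'a topology \<Rightarrow> 'a \<Rightarrow> (real \<Rightarrow> 'a) set" where
  "cid T x = pclass T (\<lambda>_. x)"

lemma iscE: "isc T c \<Longrightarrow> (\<And>p. pathin T p \<Longrightarrow> c = pclass T p \<Longrightarrow> P) \<Longrightarrow> P"
  by (auto simp: isc_def)

lemma isc_pclass [simp]: "pathin T p \<Longrightarrow> isc T (pclass T p)"
  by (auto simp: isc_def)

lemma cst_pclass [simp]: "pathin T p \<Longrightarrow> cst (pclass T p) = p 0"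
  using rep_pclass phom_ends by (metis cst_def)
lemma cen_pclass [simp]: "pathin T p \<Longrightarrow> cen (pclass T p) = p 1"
  using rep_pclass phom_ends by (metis cen_def)

lemma pclass_rep: "isc T c \<Longrightarrow> pclass T (rep c) = c"
  by (metis iscE pclass_eq rep_pclass)

lemma pathin_rep: "isc T c \<Longrightarrow> pathin T (rep c)"
  by (metis iscE phom_pathin rep_pclass)

lemma prev_pjoin: assumes "p 1 = q 0" shows "prev (p #\<^sub>p q) = prev q #\<^sub>p prev p"
proof
  fix x :: real
  consider "x < 1/2" | "x = 1/2" | "x > 1/2" by linarith
  then show "prev (p #\<^sub>p q) x = (prev q #\<^sub>p prev p) x"
  proof cases
    case 2
    then have "2 - 2*x = 1" "1 - 2*x = 0" "1 - x \<le> 1/2" by auto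
    then show ?thesis using assms by (simp add: prev_def pjoin_def)
  qed (auto simp: prev_def pjoin_def algebra_simps)
qed

lemma pathin_top: "pathin T p \<Longrightarrow> t \<in> {0..1} \<Longrightarrow> p t \<in> topspace T"
  by (force simp: pathin_def continuous_map_def Pi_iff)
lemma pathin_0_top [simp]: "pathin T p \<Longrightarrow> p 0 \<in> topspace T" by (simp add: pathin_top)
lemma pathin_1_top [simp]: "pathin T p \<Longrightarrow> p 1 \<in> topspace T" by (simp add: pathin_top)

lemma pathin_join_simp [simp]: "pathin T a \<Longrightarrow> pathin T b \<Longrightarrow> a 1 = b 0 \<Longrightarrow> pathin T (a #\<^sub>p b)"
  by (rule pathin_pjoin)
lemma pathin_prev_simp [simp]: "pathin T a \<Longrightarrow> pathin T (prev a)"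
  by (rule pathin_prev)
lemma pathin_const_simp [simp]: "x \<in> topspace T \<Longrightarrow> pathin T (\<lambda>_. x)"
  by (simp add: pathin_def)

lemma pclass_join: "pathin T p \<Longrightarrow> pathin T q \<Longrightarrow> p 1 = q 0 \<Longrightarrow>
   pclass T (p #\<^sub>p q) = cjoin T (pclass T p) (pclass T q)"
  by (metis cjoin_pclass pth_def)

lemma pclass_prev: "pathin T p \<Longrightarrow> pclass T (prev p) = cinv T (pclass T p)"
  unfolding cinv_def by (metis pclass_eq phom_prev rep_pclass)

lemma isc_cases: "isc T A \<Longrightarrow> (\<And>a. pathin T a \<Longrightarrow> A = pclass T a \<Longrightarrow> P) \<Longrightarrow> P"
  by (rule iscE)

lemma isc_cjoin [simp]: "isc T A \<Longrightarrow> isc T B \<Longrightarrow> cen A = cst B \<Longrightarrow> isc T (cjoin T A B)"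
  by (auto elim!: isc_cases simp: pclass_join[symmetric])
lemma cst_cjoin [simp]: "isc T A \<Longrightarrow> isc T B \<Longrightarrow> cen A = cst B \<Longrightarrow> cst (cjoin T A B) = cst A"
  by (auto elim!: isc_cases simp: pclass_join[symmetric])
lemma cen_cjoin [simp]: "isc T A \<Longrightarrow> isc T B \<Longrightarrow> cen A = cst B \<Longrightarrow> cen (cjoin T A B) = cen B"
  by (auto elim!: isc_cases simp: pclass_join[symmetric])
lemma isc_cinv [simp]: "isc T A \<Longrightarrow> isc T (cinv T A)"
  by (auto elim!: isc_cases simp: pclass_prev[symmetric])
lemma cst_cinv [simp]: "isc T A \<Longrightarrow> cst (cinv T A) = cen A"
  by (auto elim!: isc_cases simp: pclass_prev[symmetric])
lemma cen_cinv [simp]: "isc T A \<Longrightarrow> cen (cinv T A) = cst A"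
  by (auto elim!: isc_cases simp: pclass_prev[symmetric])
lemma isc_cid [simp]: "x \<in> topspace T \<Longrightarrow> isc T (cid T x)"
  by (simp add: cid_def)
lemma cst_cid [simp]: "x \<in> topspace T \<Longrightarrow> cst (cid T x) = x"
  by (simp add: cid_def)
lemma cen_cid [simp]: "x \<in> topspace T \<Longrightarrow> cen (cid T x) = x"
  by (simp add: cid_def)

lemma cst_top: "isc T A \<Longrightarrow> cst A \<in> topspace T"
  by (auto elim!: isc_cases)
lemma cen_top: "isc T A \<Longrightarrow> cen A \<in> topspace T"
  by (auto elim!: isc_cases)

lemma c_assoc [simp]:
  "isc T A \<Longrightarrow> isc T B \<Longrightarrow> isc T C \<Longrightarrow> cen A = cst B \<Longrightarrow> cen B = cst C \<Longrightarrow>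
   cjoin T (cjoin T A B) C = cjoin T A (cjoin T B C)"
  apply (elim isc_cases)
  apply (simp add: pclass_join[symmetric])
  apply (rule pclass_eq)
  apply (rule g_assoc)
  apply (auto simp: pth_def)
  done

lemma c_rinv [simp]: "isc T A \<Longrightarrow> cjoin T A (cinv T A) = cid T (cst A)"
  apply (elim isc_cases)
  apply (simp add: pclass_join[symmetric] pclass_prev[symmetric] cid_def)
  apply (rule pclass_eq)
  apply (rule g_rinv)
  apply (auto simp: pth_def)
  done

lemma c_linv [simp]: "isc T A \<Longrightarrow> cjoin T (cinv T A) A = cid T (cen A)"
  apply (elim isc_cases)
  apply (simp add: pclass_join[symmetric] pclass_prev[symmetric] cid_def)
  apply (rule pclass_eq)
  apply (rule g_linv)
  apply (auto simp: pth_def)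
  done

lemma c_lunit [simp]: "isc T B \<Longrightarrow> x = cst B \<Longrightarrow> cjoin T (cid T x) B = B"
  apply (elim isc_cases)
  apply (simp add: pclass_join[symmetric] cid_def)
  apply (rule pclass_eq)
  apply (rule g_lunit)
  apply (auto simp: pth_def pathin_def continuous_map_def)
  done

lemma c_runit [simp]: "isc T B \<Longrightarrow> x = cen B \<Longrightarrow> cjoin T B (cid T x) = B"
  apply (elim isc_cases)
  apply (simp add: pclass_join[symmetric] cid_def)
  apply (rule pclass_eq)
  apply (rule g_runit)
  apply (auto simp: pth_def pathin_def continuous_map_def)
  done

lemma c_cancel1 [simp]: "isc T A \<Longrightarrow> isc T B \<Longrightarrow> cst B = cst A \<Longrightarrow> cjoin T A (cjoin T (cinv T A) B) = B"
proof -
  assume a: "isc T A" "isc T B" "cst B = cst A"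
  have "cjoin T A (cjoin T (cinv T A) B) = cjoin T (cjoin T A (cinv T A)) B"
    using a by (simp del: c_rinv)
  also have "\<dots> = B" using a cst_top by simp
  finally show ?thesis .
qed

lemma c_cancel2 [simp]: "isc T A \<Longrightarrow> isc T B \<Longrightarrow> cst B = cen A \<Longrightarrow> cjoin T (cinv T A) (cjoin T A B) = B"
proof -
  assume a: "isc T A" "isc T B" "cst B = cen A"
  have "cjoin T (cinv T A) (cjoin T A B) = cjoin T (cjoin T (cinv T A) A) B"
    using a by (simp del: c_linv)
  also have "\<dots> = B" using a cen_top by simp
  finally show ?thesis .
qed

lemma cinv_cinv [simp]: "isc T A \<Longrightarrow> cinv T (cinv T A) = A"
  by (auto elim!: isc_cases simp: pclass_prev[symmetric])

lemma cinv_cjoin [simp]: "isc T A \<Longrightarrow> isc T B \<Longrightarrow> cen A = cst B \<Longrightarrow> cinv T (cjoin T A B) = cjoin T (cinv T B) (cinv T A)"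
proof -
  assume a: "isc T A" "isc T B" "cen A = cst B"
  then obtain p q where p: "pathin T p" "A = pclass T p" and q: "pathin T q" "B = pclass T q"
    by (auto elim!: isc_cases)
  have e: "p 1 = q 0" using a p q by simp
  have "prev (p #\<^sub>p q) = prev q #\<^sub>p prev p"
    using e by (rule prev_pjoin)
  then show ?thesis using p q e
    by (simp add: pclass_join[symmetric] pclass_prev[symmetric])
qed

lemma cinv_cid [simp]: "x \<in> topspace T \<Longrightarrow> cinv T (cid T x) = cid T x"
  unfolding cid_def by (simp add: pclass_prev[symmetric] prev_def)


lemmas cls_simps = pclass_join pclass_prev

section \<open>Generic facts on tensor relations\<close>

lemma rtranclp_sup_conv_sym:
  assumes "(sup R R\<inverse>\<inverse>)\<^sup>*\<^sup>* x y" shows "(sup R R\<inverse>\<inverse>)\<^sup>*\<^sup>* y x"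
  using assms
proof (induction rule: rtranclp_induct)
  case base then show ?case by simp
next
  case (step y z)
  have "(sup R R\<inverse>\<inverse>) z y" using step.hyps(2) by auto
  then show ?case using step.IH by (rule converse_rtranclp_into_rtranclp)
qed

lemma tensor_equiv: "equiv (A \<times> C) (tensor_rel A C K ra la)"
proof (rule equivI)
  show "tensor_rel A C K ra la \<subseteq> (A \<times> C) \<times> (A \<times> C)"
    by (auto simp: tensor_rel_def)
  show "refl_on (A \<times> C) (tensor_rel A C K ra la)"
    by (auto simp: refl_on_def tensor_rel_def)
  show "sym (tensor_rel A C K ra la)"
    by (auto simp: sym_def tensor_rel_def intro: rtranclp_sup_conv_sym)
  show "trans (tensor_rel A C K ra la)"
    by (auto simp: trans_def tensor_rel_def intro: rtranclp_trans)
qed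

lemma tensor_rel_invariant:
  assumes gen: "\<And>a c k. a \<in> A \<Longrightarrow> c \<in> C \<Longrightarrow> k \<in> K \<Longrightarrow> ra a k \<in> A \<Longrightarrow> la k c \<in> C \<Longrightarrow>
                 \<phi> (ra a k, c) = \<phi> (a, la k c)"
    and r: "(x, y) \<in> tensor_rel A C K ra la"
  shows "\<phi> x = \<phi> y"
proof -
  have "(sup (tensor_gen A C K ra la) (tensor_gen A C K ra la)\<inverse>\<inverse>)\<^sup>*\<^sup>* x y"
    using r by (simp add: tensor_rel_def)
  then show ?thesis
  proof (induction rule: rtranclp_induct)
    case base then show ?case by simp
  next
    case (step y z)
    have "\<phi> y = \<phi> z"
      using step.hyps(2) gen by (auto simp: tensor_gen_def)
    then show ?case using step.IH by simp
  qed
qed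

lemma tensor_gen_rel: "tensor_gen A C K ra la x y \<Longrightarrow> (x, y) \<in> tensor_rel A C K ra la"
proof -
  assume g: "tensor_gen A C K ra la x y"
  then have "(sup (tensor_gen A C K ra la) (tensor_gen A C K ra la)\<inverse>\<inverse>) x y" by simp
  then have "(sup (tensor_gen A C K ra la) (tensor_gen A C K ra la)\<inverse>\<inverse>)\<^sup>*\<^sup>* x y" by (rule r_into_rtranclp)
  moreover have "x \<in> A \<times> C" "y \<in> A \<times> C" using g by (auto simp: tensor_gen_def)
  ultimately show ?thesis by (simp add: tensor_rel_def)
qed

locale Setting =
  fixes Y :: "'b topology" and X :: "'a topology" and f :: "'b \<Rightarrow> 'a"
    and dag :: 'b and st :: 'a and U' :: "'a set" and st' :: 'a
    and bp :: "'b set \<Rightarrow> 'b" and gam :: "'b set \<Rightarrow> real \<Rightarrow> 'b" and gst :: "real \<Rightarrow> 'a"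
  assumes fib: "fibrant Y X f"
    and dag: "dag \<in> topspace Y"
    and U': "U' \<subseteq> topspace X" "st' \<in> U'"
    and bp: "\<And>C. C \<in> comps Y f U' \<Longrightarrow> bp C \<in> C"
    and gam: "\<And>C. C \<in> comps Y f U' \<Longrightarrow> gam C \<in> paths_between Y dag (bp C)"
    and gst: "gst \<in> paths_between X st st'"
begin

abbreviation "Fs \<equiv> {w \<in> topspace Y. f w \<in> U'}"
abbreviation "X' \<equiv> subtopology X U'"
abbreviation "comps' \<equiv> comps Y f U'"

definition phi :: "'b set \<Rightarrow> (real \<Rightarrow> 'b) set \<Rightarrow> (real \<Rightarrow> 'a) set \<Rightarrow> (real \<Rightarrow> 'a) set" where
  "phi C g b = blact X f g (bminus X f (gam C) gst b)"

lemma cf: "continuous_map Y X f" using fib by (simp add: fibrant_def)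

lemma gamp: "C \<in> comps' \<Longrightarrow> pth Y (gam C) dag (bp C)"
  using gam by (simp add: paths_between_def pth_def)

lemma gstp: "pth X gst st st'"
  using gst by (simp add: paths_between_def pth_def)

lemma compF: "C \<in> comps' \<Longrightarrow> C \<subseteq> Fs"
  unfolding comps_def using path_components_of_subset by fastforce

lemma cfS: "S \<subseteq> Fs \<Longrightarrow> continuous_map (subtopology Y S) X' f"
  using cf by (auto simp: continuous_map_in_subtopology continuous_map_from_subtopology)

lemma path_in_comp:
  assumes C: "C \<in> comps'" and x: "x \<in> C" and s: "pathin (subtopology Y Fs) \<sigma>" and s0: "\<sigma> 0 = x"
  shows "pathin (subtopology Y C) \<sigma>"
proof -
  have "path_connectedin (subtopology Y Fs) (\<sigma> ` {0..1})" by (rule path_connectedin_path_image[OF s])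
  moreover have "\<not> disjnt C (\<sigma> ` {0..1})" using x s0 by (force simp: disjnt_def)
  ultimately have "\<sigma> ` {0..1} \<subseteq> C" using C unfolding comps_def by (metis path_components_of_maximal)
  then show ?thesis using s by (auto simp: pathin_subtopology)
qed

lemma comp_eq: "C \<in> comps' \<Longrightarrow> C' \<in> comps' \<Longrightarrow> x \<in> C \<Longrightarrow> x \<in> C' \<Longrightarrow> C = C'"
  unfolding comps_def using path_components_of_overlap by blast

lemma comp_path:
  assumes C: "C \<in> comps'" and x: "x \<in> C" and y: "y \<in> C"
  shows "\<exists>\<delta>. pth (subtopology Y C) \<delta> x y"
proof -
  have "path_connectedin (subtopology Y Fs) C"
    using C unfolding comps_def by (rule path_connectedin_path_components_of)
  then obtain g where "pathin (subtopology Y Fs) g" "g \<in> {0..1} \<rightarrow> C" "g 0 = x" "g 1 = y"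
    using x y unfolding path_connectedin by blast
  then show ?thesis by (auto simp: pth_def pathin_subtopology)
qed

lemma exists_comp: "e \<in> Fs \<Longrightarrow> \<exists>C\<in>comps'. e \<in> C"
  unfolding comps_def using Union_path_components_of[of "subtopology Y Fs"] by auto

lemma pathin_sub: "pathin (subtopology T S) p \<Longrightarrow> pathin T p"
  by (simp add: pathin_subtopology)

lemma phi_pclass:
  assumes C: "C \<in> comps'" and p: "pth Y p dag dag" and q: "pth X' q (f (bp C)) st'"
  shows "phi C (pclass Y p) (pclass X' q) = pclass X ((f \<circ> p) #\<^sub>p (((f \<circ> gam C) #\<^sub>p q) #\<^sub>p prev gst))"
proof -
  have g: "pth X (f \<circ> gam C) (f dag) (f (bp C))" using gamp[OF C] cf by auto
  have "bminus X f (gam C) gst (pclass X' q) = pclass X (((f \<circ> gam C) #\<^sub>p q) #\<^sub>p prev gst)"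
    by (rule bminus_pclass[OF _ q g gstp]) (rule phom_subtop)
  moreover have "pth X (((f \<circ> gam C) #\<^sub>p q) #\<^sub>p prev gst) (f dag) st"
    using g q gstp by (auto simp: pth_def pathin_subtopology intro!: pathin_pjoin pathin_prev)
  ultimately show ?thesis unfolding phi_def using blact_pclass[OF p cf] by simp
qed

lemma ra_pclass:
  assumes C: "C \<in> comps'" and p: "pth Y p dag dag" and k: "pth (subtopology Y C) \<kappa> (bp C) (bp C)"
  shows "cjoin Y (pclass Y p) (cconj Y (gam C) (pclass (subtopology Y C) \<kappa>)) =
         pclass Y (p #\<^sub>p ((gam C #\<^sub>p \<kappa>) #\<^sub>p prev (gam C)))"
proof -
  have "cconj Y (gam C) (pclass (subtopology Y C) \<kappa>) = pclass Y ((gam C #\<^sub>p \<kappa>) #\<^sub>p prev (gam C))"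
    by (rule cconj_pclass[OF _ k gamp[OF C]]) (rule phom_subtop)
  moreover have "pth Y ((gam C #\<^sub>p \<kappa>) #\<^sub>p prev (gam C)) dag dag"
    using gamp[OF C] k by (auto simp: pth_def pathin_subtopology intro!: pathin_pjoin pathin_prev)
  ultimately show ?thesis using cjoin_pclass[OF p] by simp
qed

lemma la_pclass:
  assumes C: "C \<in> comps'" and k: "pth (subtopology Y C) \<kappa> (bp C) (bp C)" and q: "pth X' q (f (bp C)) st'"
  shows "blact X' f (pclass (subtopology Y C) \<kappa>) (pclass X' q) = pclass X' ((f \<circ> \<kappa>) #\<^sub>p q)"
  by (rule blact_pclass[OF k cfS[OF compF[OF C]] q])

lemma pthY_X: "pth Y p a b \<Longrightarrow> pathin X (f \<circ> p)"
  using cf by (auto simp: pth_def intro: pathin_compose)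

lemma phi_gen:
  assumes C: "C \<in> comps'" and g: "g \<in> fund_group Y dag"
    and k: "k \<in> fund_group (subtopology Y C) (bp C)" and b: "b \<in> biset X' f (bp C) st'"
  shows "phi C (cjoin Y g (cconj Y (gam C) k)) b = phi C g (blact X' f k b)"
proof -
  obtain p where p: "pth Y p dag dag" and gp: "g = pclass Y p"
    using g unfolding fund_group_def by (rule pclasses_E)
  obtain \<kappa> where kk: "pth (subtopology Y C) \<kappa> (bp C) (bp C)" and kp: "k = pclass (subtopology Y C) \<kappa>"
    using k unfolding fund_group_def by (rule pclasses_E)
  obtain q where q: "pth X' q (f (bp C)) st'" and bq: "b = pclass X' q"
    using b unfolding biset_def by (rule pclasses_E)
  have r: "pth Y (p #\<^sub>p ((gam C #\<^sub>p \<kappa>) #\<^sub>p prev (gam C))) dag dag"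
    using p gamp[OF C] kk by (auto simp: pth_def pathin_subtopology intro!: pathin_pjoin pathin_prev)
  have q2: "pth X' ((f \<circ> \<kappa>) #\<^sub>p q) (f (bp C)) st'"
    using kk q cfS[OF compF[OF C]] by auto
  have L: "phi C (cjoin Y g (cconj Y (gam C) k)) b =
     pclass X ((f \<circ> (p #\<^sub>p ((gam C #\<^sub>p \<kappa>) #\<^sub>p prev (gam C)))) #\<^sub>p (((f \<circ> gam C) #\<^sub>p q) #\<^sub>p prev gst))"
    unfolding gp kp bq ra_pclass[OF C p kk] by (rule phi_pclass[OF C r q])
  have R: "phi C g (blact X' f k b) = pclass X ((f \<circ> p) #\<^sub>p (((f \<circ> gam C) #\<^sub>p ((f \<circ> \<kappa>) #\<^sub>p q)) #\<^sub>p prev gst))"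
    unfolding gp kp bq la_pclass[OF C kk q] by (rule phi_pclass[OF C p q2])
  have a1: "pathin X (f \<circ> p)" "p 0 = dag" "p 1 = dag" using p pthY_X by (auto simp: pth_def)
  have a2: "pathin X (f \<circ> gam C)" "gam C 0 = dag" "gam C 1 = bp C" using gamp[OF C] pthY_X by (auto simp: pth_def)
  have a3: "pathin X (f \<circ> \<kappa>)" "\<kappa> 0 = bp C" "\<kappa> 1 = bp C" using kk pthY_X by (auto simp: pth_def pathin_subtopology)
  have a4: "pathin X q" "q 0 = f (bp C)" "q 1 = st'" using q by (auto simp: pth_def pathin_subtopology)
  have a5: "pathin X gst" "gst 0 = st" "gst 1 = st'" using gstp by (auto simp: pth_def)
  show ?thesis unfolding L R using a1 a2 a3 a4 a5 by (simp add: cls_simps)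
qed

end

context Setting begin

definition rel :: "'b set \<Rightarrow> (((real \<Rightarrow> 'b) set \<times> (real \<Rightarrow> 'a) set) \<times> ((real \<Rightarrow> 'b) set \<times> (real \<Rightarrow> 'a) set)) set" where
  "rel C = tensor_rel (fund_group Y dag) (biset X' f (bp C) st') (fund_group (subtopology Y C) (bp C))
              (\<lambda>g k. cjoin Y g (cconj Y (gam C) k)) (\<lambda>k b. blact X' f k b)"

definition TT where
  "TT C \<rho> \<delta> = rel C `` {(pclass Y ((\<rho> #\<^sub>p prev \<delta>) #\<^sub>p prev (gam C)), pclass X' (f \<circ> \<delta>))}"

lemma rel_equiv: "equiv (fund_group Y dag \<times> biset X' f (bp C) st') (rel C)"
  unfolding rel_def by (rule tensor_equiv)

lemma memA: "pth Y p dag dag \<Longrightarrow> pclass Y p \<in> fund_group Y dag"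
  by (simp add: fund_group_def pclasses_I)
lemma memB: "pth X' q (f (bp C)) st' \<Longrightarrow> pclass X' q \<in> biset X' f (bp C) st'"
  by (simp add: biset_def pclasses_I)
lemma memK: "pth (subtopology Y C) k (bp C) (bp C) \<Longrightarrow> pclass (subtopology Y C) k \<in> fund_group (subtopology Y C) (bp C)"
  by (simp add: fund_group_def pclasses_I)

lemma rel_gen:
  assumes "a \<in> fund_group Y dag" "c \<in> biset X' f (bp C) st'" "k \<in> fund_group (subtopology Y C) (bp C)"
    "cjoin Y a (cconj Y (gam C) k) \<in> fund_group Y dag" "blact X' f k c \<in> biset X' f (bp C) st'"
  shows "rel C `` {(cjoin Y a (cconj Y (gam C) k), c)} = rel C `` {(a, blact X' f k c)}"
proof -
  have "((cjoin Y a (cconj Y (gam C) k), c), (a, blact X' f k c)) \<in> rel C"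
    unfolding rel_def by (rule tensor_gen_rel) (use assms in \<open>auto simp: tensor_gen_def\<close>)
  then show ?thesis by (rule equiv_class_eq[OF rel_equiv])
qed

lemma pthC_X': "C \<in> comps' \<Longrightarrow> pth (subtopology Y C) \<delta> a b \<Longrightarrow> pth X' (f \<circ> \<delta>) (f a) (f b)"
  using cfS[OF compF] by blast

lemma pthC_Y: "pth (subtopology Y C) \<delta> a b \<Longrightarrow> pth Y \<delta> a b"
  by (auto simp: pth_def pathin_subtopology)

lemma pathinX'_X: "pathin X' q \<Longrightarrow> pathin X q"
  by (simp add: pathin_subtopology)

lemma Tdelta:
  assumes C: "C \<in> comps'" and r: "pth Y \<rho> dag e"
    and d: "pth (subtopology Y C) \<delta> (bp C) e" and d': "pth (subtopology Y C) \<delta>' (bp C) e"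
    and fe: "f e = st'"
  shows "TT C \<rho> \<delta> = TT C \<rho> \<delta>'"
proof -
  let ?YC = "subtopology Y C"
  have g: "pth Y (gam C) dag (bp C)" by (rule gamp[OF C])
  have dY: "pth Y \<delta> (bp C) e" "pth Y \<delta>' (bp C) e" using d d' by (auto intro: pthC_Y)
  define a' where "a' = (\<rho> #\<^sub>p prev \<delta>) #\<^sub>p prev (gam C)"
  have a'p: "pth Y a' dag dag" unfolding a'_def using r dY g by blast
  define \<kappa> where "\<kappa> = \<delta> #\<^sub>p prev \<delta>'"
  have kp: "pth ?YC \<kappa> (bp C) (bp C)" unfolding \<kappa>_def using d d' by blast
  have c'p: "pth X' (f \<circ> \<delta>') (f (bp C)) (f e)" using pthC_X'[OF C d'] .
  have c'p2: "pth X' (f \<circ> \<delta>') (f (bp C)) st'" using c'p fe by simp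
  have eq1: "cjoin Y (pclass Y a') (cconj Y (gam C) (pclass ?YC \<kappa>)) = pclass Y ((\<rho> #\<^sub>p prev \<delta>') #\<^sub>p prev (gam C))"
  proof -
    have "cjoin Y (pclass Y a') (cconj Y (gam C) (pclass ?YC \<kappa>)) = pclass Y (a' #\<^sub>p ((gam C #\<^sub>p \<kappa>) #\<^sub>p prev (gam C)))"
      by (rule ra_pclass[OF C a'p kp])
    also have "\<dots> = pclass Y ((\<rho> #\<^sub>p prev \<delta>') #\<^sub>p prev (gam C))"
      using r dY g unfolding a'_def \<kappa>_def by (simp add: cls_simps pth_def)
    finally show ?thesis .
  qed
  have eq2: "blact X' f (pclass ?YC \<kappa>) (pclass X' (f \<circ> \<delta>')) = pclass X' (f \<circ> \<delta>)"
  proof -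
    have "blact X' f (pclass ?YC \<kappa>) (pclass X' (f \<circ> \<delta>')) = pclass X' ((f \<circ> \<kappa>) #\<^sub>p (f \<circ> \<delta>'))"
      by (rule la_pclass[OF C kp c'p2])
    also have "\<dots> = pclass X' (f \<circ> \<delta>)"
      using pthC_X'[OF C d] pthC_X'[OF C d'] unfolding \<kappa>_def by (simp add: cls_simps pth_def)
    finally show ?thesis .
  qed
  have m1: "pclass Y a' \<in> fund_group Y dag" by (rule memA[OF a'p])
  have m2: "pclass X' (f \<circ> \<delta>') \<in> biset X' f (bp C) st'" by (rule memB[OF c'p2])
  have m3: "pclass ?YC \<kappa> \<in> fund_group (subtopology Y C) (bp C)" by (rule memK[OF kp])
  have m4: "pclass Y ((\<rho> #\<^sub>p prev \<delta>') #\<^sub>p prev (gam C)) \<in> fund_group Y dag"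
    using r dY g by (intro memA) blast
  have m5: "pclass X' (f \<circ> \<delta>) \<in> biset X' f (bp C) st'"
    using pthC_X'[OF C d] fe by (intro memB) simp
  have "rel C `` {(pclass Y ((\<rho> #\<^sub>p prev \<delta>') #\<^sub>p prev (gam C)), pclass X' (f \<circ> \<delta>'))} =
        rel C `` {(pclass Y a', pclass X' (f \<circ> \<delta>))}"
    using rel_gen[OF m1 m2 m3] eq1 eq2 m4 m5 by simp
  then show ?thesis unfolding TT_def a'_def by simp
qed

lemma Tsigma:
  assumes C: "C \<in> comps'" and r: "pth Y \<rho> dag e" and d: "pth (subtopology Y C) \<delta> (bp C) e"
    and s: "pth (subtopology Y C) \<sigma> e e'" and fs: "\<And>t. t \<in> {0..1} \<Longrightarrow> f (\<sigma> t) = st'"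
    and h: "phom Y \<rho>' (\<rho> #\<^sub>p \<sigma>)"
  shows "TT C \<rho>' (\<delta> #\<^sub>p \<sigma>) = TT C \<rho> \<delta>"
proof -
  have g: "pth Y (gam C) dag (bp C)" by (rule gamp[OF C])
  have dY: "pth Y \<delta> (bp C) e" "pth Y \<sigma> e e'" using d s by (auto intro: pthC_Y)
  have rs: "pth Y (\<rho> #\<^sub>p \<sigma>) dag e'" using r dY by blast
  have r': "pth Y \<rho>' dag e'" using h rs phom_ends[OF h] phom_pathin[OF h] by (auto simp: pth_def)
  have pr: "pclass Y \<rho>' = cjoin Y (pclass Y \<rho>) (pclass Y \<sigma>)"
  proof -
    have "pclass Y \<rho>' = pclass Y (\<rho> #\<^sub>p \<sigma>)" by (rule pclass_eq[OF h])
    also have "\<dots> = cjoin Y (pclass Y \<rho>) (pclass Y \<sigma>)"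
      by (rule pclass_join) (use r dY in \<open>auto simp: pth_def\<close>)
    finally show ?thesis .
  qed
  have fe: "f e = st'" using fs[of 0] s by (auto simp: pth_def)
  have fsp: "pth X' (f \<circ> \<sigma>) (f e) (f e')" by (rule pthC_X'[OF C s])
  have fdp: "pth X' (f \<circ> \<delta>) (f (bp C)) (f e)" by (rule pthC_X'[OF C d])
  have pfs: "pclass X' (f \<circ> \<sigma>) = cid X' st'"
  proof -
    have "st' \<in> topspace X'" using U' by auto
    then have "phom X' (\<lambda>_. st') (f \<circ> \<sigma>)" using fs by (intro phom_eqI) (auto simp: pathin_def)
    then show ?thesis unfolding cid_def by (simp add: pclass_eq)
  qed
  have e1: "pclass Y ((\<rho>' #\<^sub>p prev (\<delta> #\<^sub>p \<sigma>)) #\<^sub>p prev (gam C)) = pclass Y ((\<rho> #\<^sub>p prev \<delta>) #\<^sub>p prev (gam C))"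
    using r r' dY g by (simp add: cls_simps pth_def pr)
  have e2: "pclass X' (f \<circ> (\<delta> #\<^sub>p \<sigma>)) = pclass X' (f \<circ> \<delta>)"
    using fsp fdp fe by (simp add: cls_simps pth_def pfs)
  show ?thesis unfolding TT_def e1 e2 ..
qed

lemma Tcanon:
  assumes C: "C \<in> comps'" and p: "pth Y p dag dag" and q: "pth X' q (f (bp C)) st'"
    and bt: "pth (subtopology Y C) bt (bp C) e0" and fb: "\<And>t. t \<in> {0..1} \<Longrightarrow> f (bt t) = q t"
  shows "TT C (p #\<^sub>p (gam C #\<^sub>p bt)) bt = rel C `` {(pclass Y p, pclass X' q)}"
proof -
  have g: "pth Y (gam C) dag (bp C)" by (rule gamp[OF C])
  have bY: "pth Y bt (bp C) e0" using bt by (rule pthC_Y)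
  have e1: "pclass Y (((p #\<^sub>p (gam C #\<^sub>p bt)) #\<^sub>p prev bt) #\<^sub>p prev (gam C)) = pclass Y p"
    using p g bY by (simp add: cls_simps pth_def)
  have "phom X' q (f \<circ> bt)" using q fb by (intro phom_eqI) (auto simp: pth_def)
  then have e2: "pclass X' (f \<circ> bt) = pclass X' q" by (simp add: pclass_eq)
  show ?thesis unfolding TT_def e1 e2 ..
qed

lemma phi_cls:
  assumes C: "C \<in> comps'" and g: "g \<in> fund_group Y dag" and b: "b \<in> biset X' f (bp C) st'"
  shows "phi C g b \<in> biset X f dag st \<and> isc X (phi C g b) \<and> cst (phi C g b) = f dag \<and> cen (phi C g b) = st"
proof -
  obtain p where p: "pth Y p dag dag" and gp: "g = pclass Y p"
    using g unfolding fund_group_def by (rule pclasses_E)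
  obtain q where q: "pth X' q (f (bp C)) st'" and bq: "b = pclass X' q"
    using b unfolding biset_def by (rule pclasses_E)
  have W: "pth X ((f \<circ> p) #\<^sub>p (((f \<circ> gam C) #\<^sub>p q) #\<^sub>p prev gst)) (f dag) st"
    using p gamp[OF C] q gstp cf by (auto simp: pth_def pathin_subtopology intro!: pathin_pjoin pathin_prev pathin_compose)
  show ?thesis unfolding gp bq phi_pclass[OF C p q] biset_def
    using W pclasses_I[OF W] by (simp add: pth_def)
qed

lemma Klemma:
  assumes C: "C \<in> comps'" and g: "g \<in> fund_group Y dag" and b: "b \<in> biset X' f (bp C) st'"
    and r: "pth Y \<rho> dag e" and h: "phom X (f \<circ> \<rho>) (rep (phi C g b) #\<^sub>p gst)"
  shows "e \<in> C \<and> (\<forall>\<delta>. pth (subtopology Y C) \<delta> (bp C) e \<longrightarrow> TT C \<rho> \<delta> = rel C `` {(g, b)})"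
proof -
  obtain p where p: "pth Y p dag dag" and gp: "g = pclass Y p"
    using g unfolding fund_group_def by (rule pclasses_E)
  obtain q where q: "pth X' q (f (bp C)) st'" and bq: "b = pclass X' q"
    using b unfolding biset_def by (rule pclasses_E)
  have gm: "pth Y (gam C) dag (bp C)" by (rule gamp[OF C])
  have bpC: "bp C \<in> C" using bp[OF C] .
  have bpY: "bp C \<in> topspace Y" using compF[OF C] bpC by auto
  have qX: "pathin X q" using q by (auto simp: pth_def pathin_subtopology)
  obtain bt where btp: "pathin Y bt" and bt0: "bt 0 = bp C" and fbt: "\<forall>t\<in>{0..1}. f (bt t) = q t"
    using path_lift[OF fib qX bpY] q by (auto simp: pth_def)
  have btF: "pathin (subtopology Y Fs) bt"
  proof -
    have "bt t \<in> Fs" if "t \<in> {0..1}" for t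
      using that fbt q btp pathin_top[OF btp that] by (auto simp: pth_def pathin_subtopology)
    then show ?thesis using btp by (auto simp: pathin_subtopology)
  qed
  have btC: "pathin (subtopology Y C) bt" by (rule path_in_comp[OF C bpC btF bt0])
  define e0 where "e0 = bt 1"
  have btp': "pth (subtopology Y C) bt (bp C) e0" using btC bt0 by (simp add: pth_def e0_def)
  have btY: "pth Y bt (bp C) e0" using btp' by (rule pthC_Y)
  have fe0: "f e0 = st'" using fbt q by (auto simp: e0_def pth_def)
  define \<rho>0 where "\<rho>0 = p #\<^sub>p (gam C #\<^sub>p bt)"
  have r0: "pth Y \<rho>0 dag e0" unfolding \<rho>0_def using p gm btY by blast
  have phic: "phi C g b = pclass X ((f \<circ> p) #\<^sub>p (((f \<circ> gam C) #\<^sub>p q) #\<^sub>p prev gst))"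
    unfolding gp bq by (rule phi_pclass[OF C p q])
  have isc: "isc X (phi C g b)" and cstc: "cst (phi C g b) = f dag" and cenc: "cen (phi C g b) = st"
    using phi_cls[OF C g b] by auto
  have repc: "pathin X (rep (phi C g b))" using pathin_rep[OF isc] .
  have rep01: "rep (phi C g b) 0 = f dag" "rep (phi C g b) 1 = st" using cstc cenc by (auto simp: cst_def cen_def)
  have a1: "pathin X (f \<circ> p)" "p 0 = dag" "p 1 = dag" using p pthY_X by (auto simp: pth_def)
  have a2: "pathin X (f \<circ> gam C)" "gam C 0 = dag" "gam C 1 = bp C" using gm pthY_X by (auto simp: pth_def)
  have a4: "pathin X q" "q 0 = f (bp C)" "q 1 = st'" using q by (auto simp: pth_def pathin_subtopology)
  have a5: "pathin X gst" "gst 0 = st" "gst 1 = st'" using gstp by (auto simp: pth_def)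
  have a6: "pathin X (f \<circ> bt)" "bt 0 = bp C" "bt 1 = e0" using btY pthY_X by (auto simp: pth_def)
  have pfb: "pclass X (f \<circ> bt) = pclass X q"
  proof -
    have "phom X q (f \<circ> bt)" using qX fbt by (intro phom_eqI) auto
    then show ?thesis by (simp add: pclass_eq)
  qed
  have pfr: "pclass X (f \<circ> \<rho>) = cjoin X (phi C g b) (pclass X gst)"
  proof -
    have "pclass X (f \<circ> \<rho>) = pclass X (rep (phi C g b) #\<^sub>p gst)" using h by (rule pclass_eq)
    also have "\<dots> = cjoin X (phi C g b) (pclass X gst)"
      using repc rep01 a5 by (simp add: pclass_join pclass_rep[OF isc])
    finally show ?thesis .
  qed
  have "pclass X (f \<circ> \<rho>0) = pclass X (f \<circ> \<rho>)"
    unfolding pfr phic \<rho>0_def using a1 a2 a4 a5 a6 fe0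
    by (simp add: cls_simps pfb)
  then have hom0: "phom X (f \<circ> \<rho>0) (f \<circ> \<rho>)"
    using pthY_X[OF r0] by (simp add: pclass_eq_iff)
  obtain \<sigma> where s: "pth Y \<sigma> e0 e" and fs: "\<forall>t\<in>{0..1}. f (\<sigma> t) = f e0" and hs: "phom Y (\<rho>0 #\<^sub>p \<sigma>) \<rho>"
    using lift_compare[OF fib r0 r hom0] by blast
  have sF: "pathin (subtopology Y Fs) \<sigma>"
  proof -
    have "\<sigma> t \<in> Fs" if "t \<in> {0..1}" for t
      using that fs fe0 s pathin_top[of Y \<sigma> t] U' by (auto simp: pth_def)
    then show ?thesis using s by (auto simp: pathin_subtopology pth_def)
  qed
  have e0C: "e0 \<in> C" using btC pathin_top[OF btC, of 1] compF[OF C] by (auto simp: e0_def)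
  have sC: "pth (subtopology Y C) \<sigma> e0 e"
    using path_in_comp[OF C e0C sF] s by (auto simp: pth_def)
  have eC: "e \<in> C" using sC pathin_top[of "subtopology Y C" \<sigma> 1] by (auto simp: pth_def)
  have fe: "f e = st'" using fs[rule_format, of 1] fe0 s by (simp add: pth_def)
  have main: "TT C \<rho> \<delta> = rel C `` {(g, b)}" if d: "pth (subtopology Y C) \<delta> (bp C) e" for \<delta>
  proof -
    have bs: "pth (subtopology Y C) (bt #\<^sub>p \<sigma>) (bp C) e" by (rule pth_join[OF btp' sC])
    have "TT C \<rho> \<delta> = TT C \<rho> (bt #\<^sub>p \<sigma>)" by (rule Tdelta[OF C r d bs fe])
    also have "\<dots> = TT C \<rho>0 bt"
      by (rule Tsigma[OF C r0 btp' sC]) (use fs fe0 in simp, rule phom_sym[OF hs])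
    also have "\<dots> = rel C `` {(g, b)}" unfolding \<rho>0_def gp bq
      by (rule Tcanon[OF C p q btp']) (use fbt in simp)
    finally show ?thesis .
  qed
  show ?thesis using eC main by blast
qed

end

context Setting begin

lemma factor_eq: "factor Y X f dag U' st' C (bp C) (gam C) = (fund_group Y dag \<times> biset X' f (bp C) st') // rel C"
  by (simp add: factor_def tensor_prod_def rel_def)

lemma felt_eq: "factor_elt Y X f dag U' st' C (bp C) (gam C) g b = rel C `` {(g, b)}"
  by (simp add: factor_elt_def tensor_elt_def rel_def)

definition Phi where
  "Phi = (\<lambda>(C, T). phi C (fst (SOME x. x \<in> T)) (snd (SOME x. x \<in> T)))"

lemma tensor_rel_invariant2:
  assumes gen: "\<And>a c k. a \<in> A \<Longrightarrow> c \<in> C \<Longrightarrow> k \<in> K \<Longrightarrow> ra a k \<in> A \<Longrightarrow> la k c \<in> C \<Longrightarrow>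
                 \<psi> (ra a k) c = \<psi> a (la k c)"
    and r: "(x, y) \<in> tensor_rel A C K ra la"
  shows "\<psi> (fst x) (snd x) = \<psi> (fst y) (snd y)"
proof -
  have "(sup (tensor_gen A C K ra la) (tensor_gen A C K ra la)\<inverse>\<inverse>)\<^sup>*\<^sup>* x y"
    using r by (simp add: tensor_rel_def)
  then show ?thesis
  proof (induction rule: rtranclp_induct)
    case base then show ?case by simp
  next
    case (step y z)
    have "\<psi> (fst y) (snd y) = \<psi> (fst z) (snd z)"
      using step.hyps(2) gen by (auto simp: tensor_gen_def)
    then show ?case using step.IH by simp
  qed
qed

lemma Phi_elt:
  assumes C: "C \<in> comps'" and g: "g \<in> fund_group Y dag" and b: "b \<in> biset X' f (bp C) st'"
  shows "Phi (C, rel C `` {(g, b)}) = phi C g b"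
proof -
  let ?T = "rel C `` {(g, b)}"
  have "(g, b) \<in> ?T" using equiv_class_self[OF rel_equiv] g b by simp
  then have xT: "(SOME x. x \<in> ?T) \<in> ?T" by (rule someI)
  then have r: "((g, b), (SOME x. x \<in> ?T)) \<in> rel C" by simp
  have "phi C (fst (g, b)) (snd (g, b)) = phi C (fst (SOME x. x \<in> ?T)) (snd (SOME x. x \<in> ?T))"
  proof (rule tensor_rel_invariant2[where \<psi>="phi C"])
    show "((g, b), SOME x. x \<in> ?T) \<in> tensor_rel (fund_group Y dag) (biset X' f (bp C) st') (fund_group (subtopology Y C) (bp C))
              (\<lambda>g k. cjoin Y g (cconj Y (gam C) k)) (\<lambda>k b. blact X' f k b)"
      using r by (simp add: rel_def)
  next
    fix a c k assume "a \<in> fund_group Y dag" "c \<in> biset X' f (bp C) st'" "k \<in> fund_group (subtopology Y C) (bp C)"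
    then show "phi C ((\<lambda>g k. cjoin Y g (cconj Y (gam C) k)) a k) c = phi C a ((\<lambda>k b. blact X' f k b) k c)"
      using phi_gen[OF C] by simp
  qed
  then show ?thesis by (simp add: Phi_def)
qed

lemma lift_class:
  assumes c: "c \<in> biset X f dag st"
  shows "\<exists>\<rho>. pth Y \<rho> dag (\<rho> 1) \<and> f (\<rho> 1) = st' \<and> phom X (f \<circ> \<rho>) (rep c #\<^sub>p gst) \<and>
             pclass X (f \<circ> \<rho>) = cjoin X c (pclass X gst) \<and> isc X c \<and> cst c = f dag \<and> cen c = st"
proof -
  obtain w where w: "pth X w (f dag) st" and cw: "c = pclass X w"
    using c unfolding biset_def by (rule pclasses_E)
  have isc: "isc X c" and cs: "cst c = f dag" and ce: "cen c = st" using w cw by (auto simp: pth_def)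
  have rp: "pathin X (rep c)" using pathin_rep[OF isc] .
  have r01: "rep c 0 = f dag" "rep c 1 = st" using cs ce by (auto simp: cst_def cen_def)
  have g: "pth X gst st st'" by (rule gstp)
  have ap: "pathin X (rep c #\<^sub>p gst)" using rp g r01 by (auto simp: pth_def intro!: pathin_pjoin)
  obtain \<rho> where rho: "pathin Y \<rho>" "\<rho> 0 = dag" and fr: "\<forall>t\<in>{0..1}. f (\<rho> t) = (rep c #\<^sub>p gst) t"
    using path_lift[OF fib ap dag] r01 by auto
  have h: "phom X (f \<circ> \<rho>) (rep c #\<^sub>p gst)"
    using phom_eqI[OF ap, of "f \<circ> \<rho>"] fr by (auto intro: phom_sym)
  have "pclass X (f \<circ> \<rho>) = pclass X (rep c #\<^sub>p gst)" using h by (rule pclass_eq)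
  also have "\<dots> = cjoin X c (pclass X gst)"
    using rp g r01 by (simp add: pclass_join pclass_rep[OF isc] pth_def)
  finally have pc: "pclass X (f \<circ> \<rho>) = cjoin X c (pclass X gst)" .
  have f1: "f (\<rho> 1) = st'" using fr g by (auto simp: pth_def)
  show ?thesis using rho h pc isc cs ce f1 by (auto simp: pth_def)
qed

lemma main_result:
  "\<exists>\<Phi>.
     bij_betw \<Phi> (SIGMA C:comps Y f U'. factor Y X f dag U' st' C (bp C) (gam C)) (biset X f dag st) \<and>
     (\<forall>C\<in>comps Y f U'. \<forall>g\<in>fund_group Y dag. \<forall>b\<in>biset (subtopology X U') f (bp C) st'.
        \<Phi> (C, factor_elt Y X f dag U' st' C (bp C) (gam C) g b) = blact X f g (bminus X f (gam C) gst b)) \<and>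
     (\<forall>C\<in>comps Y f U'. \<forall>g\<in>fund_group Y dag. \<forall>b\<in>biset (subtopology X U') f (bp C) st'.
        \<forall>h\<in>fund_group Y dag.
        \<Phi> (C, factor_elt Y X f dag U' st' C (bp C) (gam C) (cjoin Y h g) b) =
          blact X f h (\<Phi> (C, factor_elt Y X f dag U' st' C (bp C) (gam C) g b))) \<and>
     (\<forall>C\<in>comps Y f U'. \<forall>g\<in>fund_group Y dag. \<forall>b\<in>biset (subtopology X U') f (bp C) st'.
        \<forall>l\<in>fund_group (subtopology X U') st'.
        \<Phi> (C, factor_elt Y X f dag U' st' C (bp C) (gam C) g (bract (subtopology X U') b l)) =
          bract X (\<Phi> (C, factor_elt Y X f dag U' st' C (bp C) (gam C) g b)) (cconj X gst l))"
proof (intro exI[of _ Phi] conjI ballI)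
  let ?S = "SIGMA C:comps Y f U'. factor Y X f dag U' st' C (bp C) (gam C)"
  have memS: "\<And>x P. x \<in> ?S \<Longrightarrow> (\<And>C g b. x = (C, rel C `` {(g, b)}) \<Longrightarrow> C \<in> comps' \<Longrightarrow>
      g \<in> fund_group Y dag \<Longrightarrow> b \<in> biset X' f (bp C) st' \<Longrightarrow> P) \<Longrightarrow> P"
    unfolding factor_eq by (auto elim!: quotientE)
  show "bij_betw Phi ?S (biset X f dag st)"
    unfolding bij_betw_def
  proof (intro conjI)
    show "inj_on Phi ?S"
    proof (rule inj_onI)
      fix x x' assume x: "x \<in> ?S" and x': "x' \<in> ?S" and eq: "Phi x = Phi x'"
      obtain C g b where xe: "x = (C, rel C `` {(g, b)})" and C: "C \<in> comps'"
        and g: "g \<in> fund_group Y dag" and b: "b \<in> biset X' f (bp C) st'" using memS[OF x] by blast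
      obtain C' g' b' where xe': "x' = (C', rel C' `` {(g', b')})" and C': "C' \<in> comps'"
        and g': "g' \<in> fund_group Y dag" and b': "b' \<in> biset X' f (bp C') st'" using memS[OF x'] by blast
      have eqp: "phi C g b = phi C' g' b'" using eq unfolding xe xe' Phi_elt[OF C g b] Phi_elt[OF C' g' b'] .
      obtain \<rho> where r: "pth Y \<rho> dag (\<rho> 1)" and h: "phom X (f \<circ> \<rho>) (rep (phi C g b) #\<^sub>p gst)"
        using lift_class[OF conjunct1[OF phi_cls[OF C g b]]] by blast
      have K1: "\<rho> 1 \<in> C \<and> (\<forall>\<delta>. pth (subtopology Y C) \<delta> (bp C) (\<rho> 1) \<longrightarrow> TT C \<rho> \<delta> = rel C `` {(g, b)})"
        by (rule Klemma[OF C g b r h])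
      have K2: "\<rho> 1 \<in> C' \<and> (\<forall>\<delta>. pth (subtopology Y C') \<delta> (bp C') (\<rho> 1) \<longrightarrow> TT C' \<rho> \<delta> = rel C' `` {(g', b')})"
        by (rule Klemma[OF C' g' b' r]) (use h eqp in simp)
      have CC: "C = C'" using comp_eq[OF C C'] K1 K2 by blast
      obtain \<delta> where d: "pth (subtopology Y C) \<delta> (bp C) (\<rho> 1)" using comp_path[OF C bp[OF C]] K1 by blast
      show "x = x'" using K1 K2 d CC xe xe' by auto
    qed
    show "Phi ` ?S = biset X f dag st"
    proof
      show "Phi ` ?S \<subseteq> biset X f dag st"
      proof
        fix c assume "c \<in> Phi ` ?S"
        then obtain x where x: "x \<in> ?S" and c: "c = Phi x" by blast
        obtain C g b where xe: "x = (C, rel C `` {(g, b)})" and C: "C \<in> comps'"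
          and g: "g \<in> fund_group Y dag" and b: "b \<in> biset X' f (bp C) st'" using memS[OF x] by blast
        show "c \<in> biset X f dag st" unfolding c xe Phi_elt[OF C g b] using phi_cls[OF C g b] by blast
      qed
      show "biset X f dag st \<subseteq> Phi ` ?S"
      proof
        fix c assume c: "c \<in> biset X f dag st"
        obtain \<rho> where r: "pth Y \<rho> dag (\<rho> 1)" and fe: "f (\<rho> 1) = st'"
          and pc: "pclass X (f \<circ> \<rho>) = cjoin X c (pclass X gst)"
          and isc: "isc X c" and cs: "cst c = f dag" and ce: "cen c = st"
          using lift_class[OF c] by blast
        have eF: "\<rho> 1 \<in> Fs" using r fe U' pathin_top[of Y \<rho> 1] by (auto simp: pth_def)
        obtain C where C: "C \<in> comps'" and eC: "\<rho> 1 \<in> C" using exists_comp[OF eF] by blast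
        obtain \<delta> where d: "pth (subtopology Y C) \<delta> (bp C) (\<rho> 1)" using comp_path[OF C bp[OF C] eC] by blast
        have dY: "pth Y \<delta> (bp C) (\<rho> 1)" using d by (rule pthC_Y)
        have gm: "pth Y (gam C) dag (bp C)" by (rule gamp[OF C])
        define g where "g = pclass Y ((\<rho> #\<^sub>p prev \<delta>) #\<^sub>p prev (gam C))"
        define b where "b = pclass X' (f \<circ> \<delta>)"
        have gp: "pth Y ((\<rho> #\<^sub>p prev \<delta>) #\<^sub>p prev (gam C)) dag dag"
          by (rule pth_join[OF pth_join[OF r pth_prev[OF dY]] pth_prev[OF gm]])
        have bp': "pth X' (f \<circ> \<delta>) (f (bp C)) st'" using pthC_X'[OF C d] fe by simp
        have g: "g \<in> fund_group Y dag" unfolding g_def by (rule memA[OF gp])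
        have b: "b \<in> biset X' f (bp C) st'" unfolding b_def by (rule memB[OF bp'])
        have xS: "(C, rel C `` {(g, b)}) \<in> ?S"
          using C g b unfolding factor_eq by (auto intro: quotientI)
        have a1: "pathin X (f \<circ> \<rho>)" "\<rho> 0 = dag" using r pthY_X by (auto simp: pth_def)
        have a2: "pathin X (f \<circ> gam C)" "gam C 0 = dag" "gam C 1 = bp C" using gm pthY_X by (auto simp: pth_def)
        have a3: "pathin X (f \<circ> \<delta>)" "\<delta> 0 = bp C" "\<delta> 1 = \<rho> 1" using dY pthY_X by (auto simp: pth_def)
        have a5: "pathin X gst" "gst 0 = st" "gst 1 = st'" using gstp by (auto simp: pth_def)
        have "Phi (C, rel C `` {(g, b)}) = phi C g b" by (rule Phi_elt[OF C g b])
        also have "\<dots> = pclass X ((f \<circ> ((\<rho> #\<^sub>p prev \<delta>) #\<^sub>p prev (gam C))) #\<^sub>p (((f \<circ> gam C) #\<^sub>p (f \<circ> \<delta>)) #\<^sub>p prev gst))"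
          unfolding g_def b_def by (rule phi_pclass[OF C gp bp'])
        also have "\<dots> = cjoin X (cjoin X c (pclass X gst)) (cinv X (pclass X gst))"
          using a1 a2 a3 a5 isc cs ce fe by (simp add: cls_simps pc[symmetric])
        also have "\<dots> = c" using a5 isc cs ce by simp
        finally have "Phi (C, rel C `` {(g, b)}) = c" .
        from this[symmetric] show "c \<in> Phi ` ?S" by (rule rev_image_eqI[OF xS])
      qed
    qed
  qed
next
  fix C g b assume C: "C \<in> comps Y f U'" and g: "g \<in> fund_group Y dag" and b: "b \<in> biset (subtopology X U') f (bp C) st'"
  show "Phi (C, factor_elt Y X f dag U' st' C (bp C) (gam C) g b) = blact X f g (bminus X f (gam C) gst b)"
    unfolding felt_eq Phi_elt[OF C g b] phi_def ..
next
  fix C g b h assume C: "C \<in> comps Y f U'" and g: "g \<in> fund_group Y dag" and b: "b \<in> biset (subtopology X U') f (bp C) st'"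
    and h: "h \<in> fund_group Y dag"
  obtain p where p: "pth Y p dag dag" and gp: "g = pclass Y p"
    using g unfolding fund_group_def by (rule pclasses_E)
  obtain ph where ph: "pth Y ph dag dag" and hp: "h = pclass Y ph"
    using h unfolding fund_group_def by (rule pclasses_E)
  obtain q where q: "pth X' q (f (bp C)) st'" and bq: "b = pclass X' q"
    using b unfolding biset_def by (rule pclasses_E)
  have hg: "cjoin Y h g = pclass Y (ph #\<^sub>p p)" unfolding gp hp by (rule cjoin_pclass[OF ph p])
  have hgp: "pth Y (ph #\<^sub>p p) dag dag" by (rule pth_join[OF ph p])
  have hgm: "cjoin Y h g \<in> fund_group Y dag" unfolding hg by (rule memA[OF hgp])
  have gm: "pth Y (gam C) dag (bp C)" by (rule gamp[OF C])
  have W: "pth X (((f \<circ> gam C) #\<^sub>p q) #\<^sub>p prev gst) (f dag) st \<and> pth X ((f \<circ> p) #\<^sub>p (((f \<circ> gam C) #\<^sub>p q) #\<^sub>p prev gst)) (f dag) st"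
    using p gm q gstp cf by (auto simp: pth_def pathin_subtopology intro!: pathin_pjoin pathin_prev pathin_compose)
  have a1: "pathin X (f \<circ> p)" "p 0 = dag" "p 1 = dag" using p pthY_X by (auto simp: pth_def)
  have a1': "pathin X (f \<circ> ph)" "ph 0 = dag" "ph 1 = dag" using ph pthY_X by (auto simp: pth_def)
  have a2: "pathin X (f \<circ> gam C)" "gam C 0 = dag" "gam C 1 = bp C" using gm pthY_X by (auto simp: pth_def)
  have a4: "pathin X q" "q 0 = f (bp C)" "q 1 = st'" using q by (auto simp: pth_def pathin_subtopology)
  have a5: "pathin X gst" "gst 0 = st" "gst 1 = st'" using gstp by (auto simp: pth_def)
  have "Phi (C, factor_elt Y X f dag U' st' C (bp C) (gam C) (cjoin Y h g) b) = phi C (cjoin Y h g) b"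
    unfolding felt_eq by (rule Phi_elt[OF C hgm b])
  also have "\<dots> = pclass X ((f \<circ> (ph #\<^sub>p p)) #\<^sub>p (((f \<circ> gam C) #\<^sub>p q) #\<^sub>p prev gst))"
    unfolding hg bq by (rule phi_pclass[OF C hgp q])
  also have "\<dots> = pclass X ((f \<circ> ph) #\<^sub>p ((f \<circ> p) #\<^sub>p (((f \<circ> gam C) #\<^sub>p q) #\<^sub>p prev gst)))"
    using a1 a1' a2 a4 a5 by (simp add: cls_simps)
  also have "\<dots> = blact X f h (pclass X ((f \<circ> p) #\<^sub>p (((f \<circ> gam C) #\<^sub>p q) #\<^sub>p prev gst)))"
    unfolding hp by (rule blact_pclass[OF ph cf conjunct2[OF W], symmetric])
  also have "\<dots> = blact X f h (Phi (C, factor_elt Y X f dag U' st' C (bp C) (gam C) g b))"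
    unfolding felt_eq Phi_elt[OF C g b] unfolding gp bq phi_pclass[OF C p q] ..
  finally show "Phi (C, factor_elt Y X f dag U' st' C (bp C) (gam C) (cjoin Y h g) b) =
          blact X f h (Phi (C, factor_elt Y X f dag U' st' C (bp C) (gam C) g b))" .
next
  fix C g b l assume C: "C \<in> comps Y f U'" and g: "g \<in> fund_group Y dag" and b: "b \<in> biset (subtopology X U') f (bp C) st'"
    and l: "l \<in> fund_group (subtopology X U') st'"
  obtain p where p: "pth Y p dag dag" and gp: "g = pclass Y p"
    using g unfolding fund_group_def by (rule pclasses_E)
  obtain q where q: "pth X' q (f (bp C)) st'" and bq: "b = pclass X' q"
    using b unfolding biset_def by (rule pclasses_E)
  obtain m where m: "pth X' m st' st'" and lm: "l = pclass X' m"
    using l unfolding fund_group_def by (rule pclasses_E)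
  have bl: "bract X' b l = pclass X' (q #\<^sub>p m)" unfolding bract_def bq lm by (rule cjoin_pclass[OF q m])
  have qm: "pth X' (q #\<^sub>p m) (f (bp C)) st'" by (rule pth_join[OF q m])
  have blm: "bract X' b l \<in> biset X' f (bp C) st'" unfolding bl by (rule memB[OF qm])
  have gm: "pth Y (gam C) dag (bp C)" by (rule gamp[OF C])
  have cc: "cconj X gst l = pclass X ((gst #\<^sub>p m) #\<^sub>p prev gst)"
    unfolding lm by (rule cconj_pclass[OF _ m gstp]) (rule phom_subtop)
  have a1: "pathin X (f \<circ> p)" "p 0 = dag" "p 1 = dag" using p pthY_X by (auto simp: pth_def)
  have a2: "pathin X (f \<circ> gam C)" "gam C 0 = dag" "gam C 1 = bp C" using gm pthY_X by (auto simp: pth_def)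
  have a4: "pathin X q" "q 0 = f (bp C)" "q 1 = st'" using q by (auto simp: pth_def pathin_subtopology)
  have a6: "pathin X m" "m 0 = st'" "m 1 = st'" using m by (auto simp: pth_def pathin_subtopology)
  have a5: "pathin X gst" "gst 0 = st" "gst 1 = st'" using gstp by (auto simp: pth_def)
  have "Phi (C, factor_elt Y X f dag U' st' C (bp C) (gam C) g (bract X' b l)) = phi C g (bract X' b l)"
    unfolding felt_eq by (rule Phi_elt[OF C g blm])
  also have "\<dots> = pclass X ((f \<circ> p) #\<^sub>p (((f \<circ> gam C) #\<^sub>p (q #\<^sub>p m)) #\<^sub>p prev gst))"
    unfolding gp bl by (rule phi_pclass[OF C p qm])
  also have "\<dots> = bract X (pclass X ((f \<circ> p) #\<^sub>p (((f \<circ> gam C) #\<^sub>p q) #\<^sub>p prev gst))) (cconj X gst l)"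
    unfolding cc bract_def using a1 a2 a4 a5 a6 by (simp add: cls_simps)
  also have "\<dots> = bract X (Phi (C, factor_elt Y X f dag U' st' C (bp C) (gam C) g b)) (cconj X gst l)"
    unfolding felt_eq Phi_elt[OF C g b] unfolding gp bq phi_pclass[OF C p q] ..
  finally show "Phi (C, factor_elt Y X f dag U' st' C (bp C) (gam C) g (bract (subtopology X U') b l)) =
          bract X (Phi (C, factor_elt Y X f dag U' st' C (bp C) (gam C) g b)) (cconj X gst l)" .
qed

end

theorem mainTheorem16:
  fixes Y :: "'b topology" and X :: "'a topology" and f :: "'b \<Rightarrow> 'a"
    and dag :: 'b and st :: 'a and U' :: "'a set" and st' :: 'a
    and bp :: "'b set \<Rightarrow> 'b" and gam :: "'b set \<Rightarrow> real \<Rightarrow> 'b" and gst :: "real \<Rightarrow> 'a"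
  assumes fib: "fibrant Y X f"
    and pcY: "path_connected_space Y" and pcX: "path_connected_space X"
    and dag: "dag \<in> topspace Y" and st: "st \<in> topspace X"
    and U': "U' \<subseteq> topspace X" "path_connected_space (subtopology X U')" "st' \<in> U'"
    and bp: "\<And>C. C \<in> comps Y f U' \<Longrightarrow> bp C \<in> C"
    and gam: "\<And>C. C \<in> comps Y f U' \<Longrightarrow> gam C \<in> paths_between Y dag (bp C)"
    and gst: "gst \<in> paths_between X st st'"
  shows "\<exists>\<Phi>.
     bij_betw \<Phi> (SIGMA C:comps Y f U'. factor Y X f dag U' st' C (bp C) (gam C)) (biset X f dag st) \<and>
     (\<forall>C\<in>comps Y f U'. \<forall>g\<in>fund_group Y dag. \<forall>b\<in>biset (subtopology X U') f (bp C) st'.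
        \<Phi> (C, factor_elt Y X f dag U' st' C (bp C) (gam C) g b) = blact X f g (bminus X f (gam C) gst b)) \<and>
     (\<forall>C\<in>comps Y f U'. \<forall>g\<in>fund_group Y dag. \<forall>b\<in>biset (subtopology X U') f (bp C) st'.
        \<forall>h\<in>fund_group Y dag.
        \<Phi> (C, factor_elt Y X f dag U' st' C (bp C) (gam C) (cjoin Y h g) b) =
          blact X f h (\<Phi> (C, factor_elt Y X f dag U' st' C (bp C) (gam C) g b))) \<and>
     (\<forall>C\<in>comps Y f U'. \<forall>g\<in>fund_group Y dag. \<forall>b\<in>biset (subtopology X U') f (bp C) st'.
        \<forall>l\<in>fund_group (subtopology X U') st'.
        \<Phi> (C, factor_elt Y X f dag U' st' C (bp C) (gam C) g (bract (subtopology X U') b l)) =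
          bract X (\<Phi> (C, factor_elt Y X f dag U' st' C (bp C) (gam C) g b)) (cconj X gst l))"
proof -
  interpret Setting Y X f dag st U' st' bp gam gst
    by unfold_locales (use fib dag U' bp gam gst in auto)
  show ?thesis by (rule main_result)
qed

end
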